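(* Let $X$ be an FK-space containing $\phi$, and let $\overline{\phi}$ denote the closure of $\phi$ in $X$. If $Y$ is an FK-space with $\overline{\phi}\subseteq Y\subseteq X$, then $D_p^qF^+(Y)=D_p^qF^+(X)$.
   Context: An FK-space is a vector subspace of the space $w$ of all complex sequences with a complete metrizable locally convex topology in which coordinate functionals are continuous; $X'$ is its continuous dual. $\delta^j$ has $1$ in position $j$, $0$ elsewhere; $\phi=\operatorname{span}\{\delta^j\}$. $p(n)<q(n)$ are nonnegative integer sequences with $q(n)\to\infty$. For an FK-space $X\supseteq\phi$, $D_p^qF^+(X)=\{x\in w:\lim_n\frac{1}{q(n)-p(n)}\sum_{k=p(n)+1}^{q(n)}\sum_{j=1}^kx_jf(\delta^j)\text{ exists }\forall f\in X'\}$. *)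

theory Defs
  imports "HOL-Analysis.Analysis"
begin

(* Complex sequences (elements of w) are functions nat => complex, 0-based:
   the paper's coordinate x_j (j >= 1) is  x (j - 1). *)
type_synonym seq = "nat \<Rightarrow> complex"

definition sscale :: "complex \<Rightarrow> seq \<Rightarrow> seq" where
  "sscale c x = (\<lambda>i. c * x i)"

definition sadd :: "seq \<Rightarrow> seq \<Rightarrow> seq" where
  "sadd x y = (\<lambda>i. x i + y i)"

definition delta :: "nat \<Rightarrow> seq" where
  "delta j = (\<lambda>i. if i = j then 1 else 0)"

definition phi :: "seq set" where
  "phi = {(\<lambda>i. \<Sum>j\<in>F. c j * delta j i) | F c. finite F}"

definition seq_subspace :: "seq set \<Rightarrow> bool" where
  "seq_subspace X \<longleftrightarrow> (\<lambda>i. 0) \<in> X \<and> (\<forall>x\<in>X. \<forall>y\<in>X. sadd x y \<in> X)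
     \<and> (\<forall>c. \<forall>x\<in>X. sscale c x \<in> X)"

definition FK_space :: "seq set \<Rightarrow> seq topology \<Rightarrow> bool" where
  "FK_space X T \<longleftrightarrow>
     seq_subspace X \<and> topspace T = X \<and>
     continuous_map (prod_topology T T) T (\<lambda>(x, y). sadd x y) \<and>
     continuous_map (prod_topology euclidean T) T (\<lambda>(c, x). sscale c x) \<and>
     (\<forall>U. openin T U \<and> (\<lambda>i. 0) \<in> U \<longrightarrow>
        (\<exists>V. openin T V \<and> (\<lambda>i. 0) \<in> V \<and> V \<subseteq> U \<and>
             (\<forall>x\<in>V. \<forall>y\<in>V. \<forall>t::real. 0 \<le> t \<and> t \<le> 1 \<longrightarrow>
                 sadd (sscale (complex_of_real t) x) (sscale (complex_of_real (1 - t)) y) \<in> V))) \<and>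
     completely_metrizable_space T \<and>
     (\<forall>j. continuous_map T euclidean (\<lambda>x. x j))"

definition cdual :: "seq set \<Rightarrow> seq topology \<Rightarrow> (seq \<Rightarrow> complex) set" where
  "cdual X T = {f. (\<forall>x\<in>X. \<forall>y\<in>X. f (sadd x y) = f x + f y) \<and>
                   (\<forall>c. \<forall>x\<in>X. f (sscale c x) = c * f x) \<and>
                   continuous_map T euclidean f}"

(* D_p^q F^+(X); inner sum over paper-indices j = 1..k, i.e. 0-based j < k *)
definition DpqFplus :: "(nat \<Rightarrow> nat) \<Rightarrow> (nat \<Rightarrow> nat) \<Rightarrow> seq set \<Rightarrow> seq topology \<Rightarrow> seq set" where
  "DpqFplus p q X T = {x. \<forall>f\<in>cdual X T.
      convergent (\<lambda>n. (1 / of_nat (q n - p n)) *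
         (\<Sum>k\<in>{p n<..q n}. \<Sum>j<k. x j * f (delta j)))}"

end

theory Submission
  imports Defs "HOL-Library.Function_Algebras"
begin


lemma sadd_eq: "sadd x y = x + y" by (simp add: sadd_def plus_fun_def)
lemma zero_seq: "(\<lambda>i. 0) = (0::seq)" by (simp add: zero_fun_def)
lemma sscale_apply: "sscale c x i = c * x i" by (simp add: sscale_def)
lemma sscale_add: "sscale c (x + y) = sscale c x + sscale c y"
  by (rule ext) (simp add: sscale_def algebra_simps)
lemma sscale_diff: "sscale c (x - y) = sscale c x - sscale c y"
  by (rule ext) (simp add: sscale_def algebra_simps)
lemma sscale_0 [simp]: "sscale 0 x = 0" by (rule ext) (simp add: sscale_def)
lemma sscale_zero [simp]: "sscale c 0 = 0" by (rule ext) (simp add: sscale_def)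
lemma sscale_1 [simp]: "sscale 1 x = x" by (rule ext) (simp add: sscale_def)
lemma sscale_m1: "sscale (-1) x = - x" by (rule ext) (simp add: sscale_def)
lemma sscale_sscale: "sscale c (sscale c' x) = sscale (c*c') x" by (rule ext) (simp add: sscale_def)
lemma sscale_add_left: "sscale (c + c') x = sscale c x + sscale c' x" by (rule ext) (simp add: sscale_def algebra_simps)
lemma sscale_neg: "sscale c (- x) = - sscale c x" by (rule ext) (simp add: sscale_def)

locale fks =
  fixes X :: "seq set" and T :: "seq topology"
  assumes top: "topspace T = X"
  and zeroX: "0 \<in> X"
  and addX: "\<And>x y. x\<in>X \<Longrightarrow> y\<in>X \<Longrightarrow> x + y \<in> X"
  and scX: "\<And>c x. x\<in>X \<Longrightarrow> sscale c x \<in> X"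
  and addc: "continuous_map (prod_topology T T) T (\<lambda>(x,y). x + y)"
  and scc: "\<And>c. continuous_map T T (sscale c)"
  and scx: "\<And>x. x\<in>X \<Longrightarrow> continuous_map euclidean T (\<lambda>c. sscale c x)"
  and cm: "completely_metrizable_space T"
  and coord: "\<And>j. continuous_map T euclidean (\<lambda>x. x j)"
begin

lemma negX: "x \<in> X \<Longrightarrow> - x \<in> X"
  using scX[of x "-1"] by (simp add: sscale_m1)

lemma diffX: "x \<in> X \<Longrightarrow> y \<in> X \<Longrightarrow> x - y \<in> X"
  using addX[of x "-y"] negX[of y] by simp

lemma cont_open: "continuous_map T T h \<Longrightarrow> openin T U \<Longrightarrow> openin T {x\<in>X. h x \<in> U}"
  using openin_continuous_map_preimage[of T T h U] top by simp

lemma cont_transl: "a \<in> X \<Longrightarrow> continuous_map T T (\<lambda>x. a + x)"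
proof -
  assume a: "a \<in> X"
  have "continuous_map T (prod_topology T T) (\<lambda>x. (a, x))"
    using a top by (simp add: continuous_map_pairwise o_def)
  from continuous_map_compose[OF this addc] show ?thesis by (simp add: o_def)
qed

lemma cont_transl2: "a \<in> X \<Longrightarrow> continuous_map T T (\<lambda>x. x + a)"
  using cont_transl[of a] by (simp add: add.commute)

lemma cont_neg: "continuous_map T T (\<lambda>x. - x)"
  using scc[of "-1"] by (simp add: sscale_m1[abs_def])

lemma cont_diff2: "a \<in> X \<Longrightarrow> continuous_map T T (\<lambda>x. x - a)"
  using cont_transl2[of "-a"] negX by simp

lemma cont_diff1: "a \<in> X \<Longrightarrow> continuous_map T T (\<lambda>x. a - x)"
  using continuous_map_compose[OF cont_neg cont_transl[of a]] by (simp add: o_def)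

lemma add_nbhd:
  assumes "openin T U" "x \<in> X" "y \<in> X" "x + y \<in> U"
  shows "\<exists>A B. openin T A \<and> openin T B \<and> x \<in> A \<and> y \<in> B \<and> (\<forall>a\<in>A. \<forall>b\<in>B. a + b \<in> U)"
proof -
  define P where "P = {z \<in> topspace (prod_topology T T). (\<lambda>(x,y). x + y) z \<in> U}"
  have o: "openin (prod_topology T T) P"
    unfolding P_def by (rule openin_continuous_map_preimage[OF addc assms(1)])
  have xy: "(x,y) \<in> P"
    using assms top unfolding P_def by simp
  obtain A B where AB: "openin T A" "openin T B" "x \<in> A" "y \<in> B" "A \<times> B \<subseteq> P"
    using openin_prod_topology_alt[THEN iffD1, rule_format, OF o xy] by blast
  have "\<forall>a\<in>A. \<forall>b\<in>B. a + b \<in> U"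
  proof (intro ballI)
    fix a b assume "a \<in> A" "b \<in> B"
    then have "(a,b) \<in> P" using AB(5) by blast
    then show "a + b \<in> U" unfolding P_def by simp
  qed
  then show ?thesis using AB(1-4) by blast
qed

lemma diff_nbhd:
  assumes "openin T U" "x \<in> X" "y \<in> X" "x - y \<in> U"
  shows "\<exists>A B. openin T A \<and> openin T B \<and> x \<in> A \<and> y \<in> B \<and> (\<forall>a\<in>A. \<forall>b\<in>B. a - b \<in> U)"
proof -
  have "x + - y \<in> U" using assms(4) by simp
  from add_nbhd[OF assms(1) assms(2) negX[OF assms(3)] this]
  obtain A B where AB: "openin T A" "openin T B" "x \<in> A" "- y \<in> B" "\<forall>a\<in>A. \<forall>b\<in>B. a + b \<in> U"
    by blast
  have "openin T {z\<in>X. - z \<in> B}" using cont_open[OF cont_neg AB(2)] .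
  moreover have "y \<in> {z\<in>X. - z \<in> B}" using AB(4) assms(3) by blast
  moreover have "\<forall>a\<in>A. \<forall>b\<in>{z\<in>X. - z \<in> B}. a - b \<in> U"
  proof (intro ballI)
    fix a b assume "a \<in> A" "b \<in> {z\<in>X. - z \<in> B}"
    then have "a + (- b) \<in> U" using AB(5) by blast
    then show "a - b \<in> U" by simp
  qed
  ultimately show ?thesis using AB(1,3) by (intro exI[of _ A] exI[of _ "{z\<in>X. - z \<in> B}"]) simp
qed

lemma half_nbhd:
  assumes "openin T E" "0 \<in> E"
  shows "\<exists>E'. openin T E' \<and> 0 \<in> E' \<and> E' \<subseteq> E \<and> (\<forall>u\<in>E'. \<forall>v\<in>E'. u + v \<in> E)"
proof -
  obtain A B where "openin T A" "openin T B" "0 \<in> A" "0 \<in> B" "\<forall>a\<in>A. \<forall>b\<in>B. a + b \<in> E"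
    using add_nbhd[OF assms(1) zeroX zeroX] assms(2) by auto
  moreover have "openin T (A \<inter> B \<inter> E)" using calculation assms by blast
  ultimately show ?thesis
    by (intro exI[of _ "A \<inter> B \<inter> E"]) (simp add: assms)
qed

lemma absorb:
  assumes "x \<in> X" "openin T U" "0 \<in> U"
  shows "\<exists>e>0. \<forall>c. cmod c < e \<longrightarrow> sscale c x \<in> U"
proof -
  have "openin euclidean {c \<in> topspace euclidean. sscale c x \<in> U}"
    using openin_continuous_map_preimage[OF scx[OF assms(1)] assms(2)] .
  then have "open {c. sscale c x \<in> U}" by simp
  moreover have "0 \<in> {c. sscale c x \<in> U}" using assms by simp
  ultimately obtain e where "e > 0" "ball 0 e \<subseteq> {c. sscale c x \<in> U}"
    using open_contains_ball by blast
  then show ?thesis by (auto simp: subset_iff dist_norm)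
qed

lemma limit_coord: "limitin T s l sequentially \<Longrightarrow> (\<lambda>n. s n j) \<longlonglongrightarrow> l j"
  using continuous_map_limit[OF coord[of j], of s l sequentially]
  by (simp add: o_def)

end

lemma limit_unique_two:
  assumes "fks X T" "fks Y S" "limitin T s a sequentially" "limitin S s b sequentially"
  shows "a = b"
proof (rule ext)
  fix j
  show "a j = b j"
    using fks.limit_coord[OF assms(1) assms(3)] fks.limit_coord[OF assms(2) assms(4)]
    by (rule LIMSEQ_unique)
qed



lemma (in Metric_space) MCauchy_geom:
  assumes "range u \<subseteq> M" "\<And>j i. d (u j) (u (j+i)) < (1/2)^j"
  shows "MCauchy u"
  unfolding MCauchy_def
proof (intro conjI allI impI assms(1))
  fix e :: real assume "e > 0"
  then obtain N where N: "(1/2::real)^N < e/2" using real_arch_pow_inv[of "e/2" "1/2"] by auto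
  show "\<exists>N. \<forall>n n'. N \<le> n \<longrightarrow> N \<le> n' \<longrightarrow> d (u n) (u n') < e"
  proof (intro exI allI impI)
    fix n n' assume "N \<le> n" "N \<le> n'"
    have "d (u n) (u n') \<le> d (u N) (u n) + d (u N) (u n')"
      using triangle'' assms(1) by blast
    also have "d (u N) (u n) < (1/2)^N" using assms(2)[of N "n - N"] \<open>N \<le> n\<close> by simp
    also have "d (u N) (u n') < (1/2)^N" using assms(2)[of N "n' - N"] \<open>N \<le> n'\<close> by simp
    finally show "d (u n) (u n') < e" using N by simp
  qed
qed

context fks begin

lemma small_nbhd:
  assumes "Metric_space X d" "T = Metric_space.mtopology X d" "x \<in> X" "e > 0" "openin T E" "0 \<in> E"
  shows "\<exists>E'. openin T E' \<and> 0 \<in> E' \<and> E' \<subseteq> E \<and> (\<forall>u\<in>E'. \<forall>v\<in>E'. u + v \<in> E)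
     \<and> (\<forall>u\<in>E'. \<forall>v\<in>E'. d x (x + (u + v)) < e)"
proof -
  interpret Metric_space X d by (rule assms(1))
  have "openin T (mball x e)" using assms(2) by simp
  moreover have "x + 0 \<in> mball x e" using assms by simp
  ultimately obtain A B where AB: "openin T A" "openin T B" "x \<in> A" "0 \<in> B" "\<forall>a\<in>A. \<forall>b\<in>B. a + b \<in> mball x e"
    using add_nbhd[of "mball x e" x 0] assms(3) zeroX by blast
  obtain B' where B': "openin T B'" "0 \<in> B'" "B' \<subseteq> B" "\<forall>u\<in>B'. \<forall>v\<in>B'. u + v \<in> B"
    using half_nbhd[OF AB(2) AB(4)] by blast
  obtain E'' where E'': "openin T E''" "0 \<in> E''" "E'' \<subseteq> E" "\<forall>u\<in>E''. \<forall>v\<in>E''. u + v \<in> E"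
    using half_nbhd[OF assms(5) assms(6)] by blast
  have "openin T (B' \<inter> E'')" using B'(1) E''(1) by blast
  moreover have "\<forall>u\<in>B' \<inter> E''. \<forall>v\<in>B' \<inter> E''. d x (x + (u + v)) < e"
  proof (intro ballI)
    fix u v assume "u \<in> B' \<inter> E''" "v \<in> B' \<inter> E''"
    then have "u + v \<in> B" using B'(4) by blast
    then have "x + (u + v) \<in> mball x e" using AB(3,5) by blast
    then show "d x (x + (u + v)) < e" by simp
  qed
  ultimately show ?thesis using B'(2) E'' by (intro exI[of _ "B' \<inter> E''"]) blast
qed

lemma cauchy_conv:
  assumes s: "\<And>n. s n \<in> X"
    and C: "\<And>U. openin T U \<Longrightarrow> 0 \<in> U \<Longrightarrow> \<exists>N. \<forall>m\<ge>N. \<forall>n\<ge>N. s m - s n \<in> U"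
  shows "\<exists>z\<in>X. limitin T s z sequentially"
proof -
  obtain M d where Md: "Metric_space M d" "Metric_space.mcomplete M d" "T = Metric_space.mtopology M d"
    using cm unfolding completely_metrizable_space_def by blast
  have MX: "M = X" using Md(1,3) top Metric_space.topspace_mtopology by metis
  interpret Metric_space X d using Md(1) MX by simp
  have Tm: "T = mtopology" using Md(3) MX by simp
  have comp: mcomplete using Md(2) MX by simp
  define P where "P \<equiv> \<lambda>(j::nat) (st::nat \<times> seq \<times> seq set). fst (snd st) \<in> X \<and> openin T (snd (snd st))
     \<and> 0 \<in> snd (snd st) \<and> (\<forall>u\<in>snd (snd st). \<forall>v\<in>snd (snd st). d (fst (snd st)) (fst (snd st) + (u+v)) < (1/2)^j)"
  define Q where "Q \<equiv> \<lambda>(j::nat) (st::nat \<times> seq \<times> seq set) (st'::nat \<times> seq \<times> seq set).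
     Suc (fst st) \<le> fst st' \<and> (\<forall>m\<ge>fst st'. \<forall>n\<ge>fst st'. s m - s n \<in> snd (snd st))
     \<and> fst (snd st') = (if even j then fst (snd st) + s (fst st') else fst (snd st) - s (fst st'))
     \<and> snd (snd st') \<subseteq> snd (snd st) \<and> (\<forall>u\<in>snd (snd st'). \<forall>v\<in>snd (snd st'). u + v \<in> snd (snd st))"
  have P0: "\<exists>st. P 0 st"
  proof -
    obtain E where "openin T E" "0 \<in> E" "\<forall>u\<in>E. \<forall>v\<in>E. d 0 (0 + (u + v)) < 1"
      using small_nbhd[OF Md(1)[unfolded MX] Tm zeroX, of 1 X] top zeroX by auto
    then show ?thesis unfolding P_def using zeroX by (intro exI[of _ "(0, 0, E)"]) simp
  qed
  have step: "\<exists>st'. P (Suc j) st' \<and> Q j st st'" if "P j st" for j st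
  proof -
    obtain N t E where st: "st = (N, t, E)" by (cases st) auto
    have t: "t \<in> X" "openin T E" "0 \<in> E" using that unfolding P_def st by auto
    obtain N1 where N1: "\<forall>m\<ge>N1. \<forall>n\<ge>N1. s m - s n \<in> E" using C[OF t(2,3)] by blast
    define N' where "N' = max (Suc N) N1"
    define t' where "t' = (if even j then t + s N' else t - s N')"
    have t'X: "t' \<in> X" unfolding t'_def using addX diffX s t(1) by simp
    obtain E' where E': "openin T E'" "0 \<in> E'" "E' \<subseteq> E" "\<forall>u\<in>E'. \<forall>v\<in>E'. u + v \<in> E"
      "\<forall>u\<in>E'. \<forall>v\<in>E'. d t' (t' + (u + v)) < (1/2)^(Suc j)"
      using small_nbhd[OF Md(1)[unfolded MX] Tm t'X, of "(1/2)^(Suc j)" E] t by auto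
    have "P (Suc j) (N', t', E')" unfolding P_def using t'X E' by simp
    moreover have "Q j st (N', t', E')" unfolding Q_def st using N1 E' by (simp add: N'_def t'_def)
    ultimately show ?thesis by blast
  qed
  obtain f where f: "\<forall>j. P j (f j) \<and> Q j (f j) (f (Suc j))"
    using dependent_nat_choice[of P Q, OF P0 step] by blast
  define Nn where "Nn j = fst (f j)" for j
  define t where "t j = fst (snd (f j))" for j
  define E where "E j = snd (snd (f j))" for j
  have tX: "t j \<in> X" and Eo: "openin T (E j)" and E0: "0 \<in> E j"
    and Esmall: "\<forall>u\<in>E j. \<forall>v\<in>E j. d (t j) (t j + (u+v)) < (1/2)^j" for j
    using f unfolding P_def t_def E_def by auto
  have NSuc: "Suc (Nn j) \<le> Nn (Suc j)"
    and tail: "\<forall>m\<ge>Nn (Suc j). \<forall>n\<ge>Nn (Suc j). s m - s n \<in> E j"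
    and tstep: "t (Suc j) = (if even j then t j + s (Nn (Suc j)) else t j - s (Nn (Suc j)))"
    and Emono: "E (Suc j) \<subseteq> E j"
    and Ehalf: "\<forall>u\<in>E (Suc j). \<forall>v\<in>E (Suc j). u + v \<in> E j" for j
    using f unfolding Q_def t_def E_def Nn_def by auto
  have Nge: "j \<le> Nn j" for j
  proof (induction j)
    case (Suc j) then show ?case using NSuc[of j] by simp
  qed simp
  have Emono_le: "E k \<subseteq> E j" if "j \<le> k" for j k
    using lift_Suc_antimono_le[of E, OF Emono that] .
  have a: "t (j+2) - t j \<in> E j" for j
  proof -
    have le: "Nn (Suc j) \<le> Nn (Suc (Suc j))" using NSuc[of "Suc j"] by simp
    show ?thesis
    proof (cases "even j")
      case True
      then have "t (j+2) - t j = s (Nn (Suc j)) - s (Nn (Suc (Suc j)))"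
        using tstep[of j] tstep[of "Suc j"] by simp
      then show ?thesis using tail[of j] le by simp
    next
      case False
      then have "t (j+2) - t j = s (Nn (Suc (Suc j))) - s (Nn (Suc j))"
        using tstep[of j] tstep[of "Suc j"] by simp
      then show ?thesis using tail[of j] le by simp
    qed
  qed
  have c: "t (j+2+2*i) - t (j+2) \<in> E (j+1)" for i j
  proof (induction i arbitrary: j)
    case 0
    have "t (j+2+2*0) - t (j+2) = 0" by simp
    with E0[of "j+1"] show ?case by metis
  next
    case (Suc i)
    have eq: "t (j+2+2*Suc i) - t (j+2) = (t ((j+2)+2+2*i) - t ((j+2)+2)) + (t ((j+2)+2) - t (j+2))"
      by (simp add: algebra_simps)
    have h1: "t ((j+2)+2+2*i) - t ((j+2)+2) \<in> E ((j+2)+1)" by (rule Suc.IH)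
    have e1: "E ((j+2)+1) \<subseteq> E (Suc (j+1))" using Emono[of "j+2"] by (simp add: numeral_2_eq_2)
    have "t ((j+2)+2+2*i) - t ((j+2)+2) \<in> E (Suc (j+1))" using e1 h1 by (rule subsetD)
    moreover have "t ((j+2)+2) - t (j+2) \<in> E (Suc (j+1))" using a[of "j+2"] by simp
    ultimately show ?case unfolding eq using Ehalf[of "j+1"] by blast
  qed
  have dist: "d (t j) (t (j + 2*i)) < (1/2)^j" for j i
  proof (cases i)
    case 0 then show ?thesis using tX by simp
  next
    case (Suc i')
    have u: "t (j+2) - t j \<in> E j" using a by simp
    have v: "t (j+2+2*i') - t (j+2) \<in> E j" using c[of j i'] Emono_le[of j "j+1"] by auto
    have "t j + ((t (j+2) - t j) + (t (j+2+2*i') - t (j+2))) = t (j + 2*i)"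
      using Suc by (simp add: algebra_simps)
    then show ?thesis using Esmall[of j] u v by metis
  qed
  define a where "a k = t (2*k+1)" for k
  define b where "b k = t (2*k)" for k
  have pow_le: "(1/2::real)^(2*j+1) \<le> (1/2)^j" "(1/2::real)^(2*j) \<le> (1/2)^j" for j
    by (rule power_decreasing; simp)+
  have "MCauchy a"
  proof (rule MCauchy_geom)
    show "range a \<subseteq> X" using tX by (auto simp: a_def)
    fix j i
    have "d (a j) (a (j+i)) = d (t (2*j+1)) (t ((2*j+1) + 2*i))" by (simp add: a_def algebra_simps)
    also have "\<dots> < (1/2)^(2*j+1)" by (rule dist)
    also have "\<dots> \<le> (1/2)^j" by (rule pow_le)
    finally show "d (a j) (a (j+i)) < (1/2)^j" .
  qed
  then obtain la where la: "limitin T a la sequentially" using comp unfolding mcomplete_def Tm by blast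
  have "MCauchy b"
  proof (rule MCauchy_geom)
    show "range b \<subseteq> X" using tX by (auto simp: b_def)
    fix j i
    have "d (b j) (b (j+i)) = d (t (2*j)) (t ((2*j) + 2*i))" by (simp add: b_def algebra_simps)
    also have "\<dots> < (1/2)^(2*j)" by (rule dist)
    also have "\<dots> \<le> (1/2)^j" by (rule pow_le)
    finally show "d (b j) (b (j+i)) < (1/2)^j" .
  qed
  then obtain lb where lb: "limitin T b lb sequentially" using comp unfolding mcomplete_def Tm by blast
  have laX: "la \<in> X" and lbX: "lb \<in> X" using la lb top by (auto simp: limitin_def)
  have sN: "s (Nn (2*k+1)) = a k - b k" for k
    using tstep[of "2*k"] by (simp add: a_def b_def)
  define z where "z = la - lb"
  have zX: "z \<in> X" using diffX laX lbX by (simp add: z_def)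
  have "limitin T s z sequentially"
    unfolding limitin_def
  proof (intro conjI allI impI)
    show "z \<in> topspace T" using zX top by simp
    fix U assume U: "openin T U \<and> z \<in> U"
    obtain A1 B1 where AB1: "openin T A1" "openin T B1" "z \<in> A1" "0 \<in> B1" "\<forall>a\<in>A1. \<forall>b\<in>B1. a + b \<in> U"
      using add_nbhd[of U z 0] U zX zeroX by auto
    obtain A B where AB: "openin T A" "openin T B" "la \<in> A" "lb \<in> B" "\<forall>a\<in>A. \<forall>b\<in>B. a - b \<in> A1"
      using diff_nbhd[of A1 la lb] AB1 laX lbX by (auto simp: z_def)
    have "eventually (\<lambda>k. a k \<in> A) sequentially" using la AB unfolding limitin_def by blast
    moreover have "eventually (\<lambda>k. b k \<in> B) sequentially" using lb AB unfolding limitin_def by blast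
    ultimately obtain K where K: "\<forall>k\<ge>K. a k \<in> A \<and> b k \<in> B"
      unfolding eventually_sequentially by (metis (no_types, lifting) eventually_conj eventually_sequentially)
    obtain N0 where N0: "\<forall>m\<ge>N0. \<forall>n\<ge>N0. s m - s n \<in> B1" using C[OF AB1(2,4)] by blast
    define k where "k = max K N0"
    have "N0 \<le> Nn (2*k+1)" using Nge[of "2*k+1"] by (simp add: k_def)
    have "\<forall>n\<ge>N0. s n \<in> U"
    proof (intro allI impI)
      fix n assume "N0 \<le> n"
      have "a k - b k \<in> A1" using K AB(5) by (simp add: k_def)
      moreover have "s n - s (Nn (2*k+1)) \<in> B1" using N0 \<open>N0 \<le> n\<close> \<open>N0 \<le> Nn (2*k+1)\<close> by blast
      ultimately have "(a k - b k) + (s n - s (Nn (2*k+1))) \<in> U" using AB1(5) by blast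
      then show "s n \<in> U" using sN[of k] by simp
    qed
    then show "eventually (\<lambda>n. s n \<in> U) sequentially" unfolding eventually_sequentially by blast
  qed
  then show ?thesis using zX by blast
qed

end


lemma baire_step:
  assumes FY: "fks Y TY" and FX: "fks X TX" and sub: "Y \<subseteq> X"
    and U: "openin TX U" "0 \<in> U"
  shows "\<exists>W. openin TY W \<and> 0 \<in> W \<and> W \<subseteq> TY closure_of (U \<inter> Y)"
proof -
  interpret A: fks Y TY by (rule FY)
  interpret B: fks X TX by (rule FX)
  have "(0::seq) - 0 \<in> U" using U by simp
  then obtain V1 V2 where V12: "openin TX V1" "openin TX V2" "0 \<in> V1" "0 \<in> V2" "\<forall>a\<in>V1. \<forall>b\<in>V2. a - b \<in> U"
    using B.diff_nbhd[OF U(1) B.zeroX B.zeroX] by blast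
  define V where "V = V1 \<inter> V2"
  have Vo: "openin TX V" and V0: "0 \<in> V" and Vd: "\<forall>v\<in>V. \<forall>w\<in>V. v - w \<in> U"
    using V12 by (auto simp: V_def)
  define S where "S n = {y\<in>Y. sscale (1 / of_nat (Suc n)) y \<in> V}" for n
  define F where "F n = TY closure_of (S n)" for n
  have cover: "Y \<subseteq> \<Union> (range F)"
  proof
    fix y assume y: "y \<in> Y"
    then have "y \<in> X" using sub by blast
    obtain e where e: "e > 0" "\<forall>c. cmod c < e \<longrightarrow> sscale c y \<in> V"
      using B.absorb[OF \<open>y \<in> X\<close> Vo V0] by blast
    obtain n where n: "inverse (of_nat (Suc n)) < e" using reals_Archimedean[OF e(1)] by blast
    have "cmod (1 / of_nat (Suc n)) = 1 / real (Suc n)" by (simp only: norm_divide norm_one norm_of_nat)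
    then have "cmod (1 / of_nat (Suc n)) < e" using n by (simp add: inverse_eq_divide)
    then have "y \<in> S n" using e(2) y unfolding S_def by blast
    then have "y \<in> F n" unfolding F_def using closure_of_subset[of "S n" TY] A.top
      unfolding S_def by blast
    then show "y \<in> \<Union> (range F)" by blast
  qed
  have UF: "\<Union> (range F) = Y"
    using cover closure_of_subset_topspace[of TY] A.top unfolding F_def by blast
  have "\<exists>n. TY interior_of F n \<noteq> {}"
  proof (rule ccontr)
    assume "\<not> (\<exists>n. TY interior_of F n \<noteq> {})"
    then have "TY interior_of \<Union> (range F) = {}"
      by (intro Baire_category_alt) (auto simp: A.cm F_def)
    then have "TY interior_of (topspace TY) = {}" using UF A.top by simp
    then show False using interior_of_topspace[of TY] A.top A.zeroX by (metis empty_iff)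
  qed
  then obtain n p where p: "p \<in> TY interior_of F n" by blast
  define Oi where "Oi = TY interior_of F n"
  have Oo: "openin TY Oi" and OF: "Oi \<subseteq> F n" and pO: "p \<in> Oi"
    using p interior_of_subset[of TY "F n"] by (auto simp: Oi_def)
  have pY: "p \<in> Y" using openin_subset[OF Oo] pO A.top by blast
  define c :: complex where "c = of_nat (Suc n)"
  have c0: "c \<noteq> 0" unfolding c_def by (rule of_nat_neq_0)
  have cc1: "sscale c (sscale (1/c) x) = x" "sscale (1/c) (sscale c x) = x" for x
    using c0 by (simp_all add: sscale_sscale)
  define Oj where "Oj = {y\<in>Y. sscale c y \<in> Oi}"
  have Ojo: "openin TY Oj" unfolding Oj_def by (rule A.cont_open[OF A.scc Oo])
  define p' where "p' = sscale (1/c) p"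
  have p'Y: "p' \<in> Y" using pY A.scX by (simp add: p'_def)
  have p'Oj: "p' \<in> Oj" using p'Y pO cc1 by (simp add: Oj_def p'_def)
  have Ojcl: "Oj \<subseteq> TY closure_of (V \<inter> Y)"
  proof
    fix u assume u: "u \<in> Oj"
    then have uY: "u \<in> Y" by (simp add: Oj_def)
    show "u \<in> TY closure_of (V \<inter> Y)"
      unfolding in_closure_of
    proof (intro conjI allI impI)
      show "u \<in> topspace TY" using uY A.top by simp
      fix N assume N: "u \<in> N \<and> openin TY N"
      define N' where "N' = {y\<in>Y. sscale (1/c) y \<in> N}"
      have N'o: "openin TY N'" unfolding N'_def using A.cont_open[OF A.scc] N by blast
      have "sscale c u \<in> N'" using N uY A.scX cc1 by (simp add: N'_def)
      moreover have "sscale c u \<in> F n" using u OF by (auto simp: Oj_def)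
      ultimately obtain y where y: "y \<in> S n" "y \<in> N'"
        using N'o unfolding F_def in_closure_of by blast
      have "1 / of_nat (Suc n) = 1 / c" by (simp add: c_def)
      then have "sscale (1/c) y \<in> V \<inter> Y" "sscale (1/c) y \<in> N"
        using y A.scX unfolding S_def N'_def by auto
      then show "\<exists>y. y \<in> V \<inter> Y \<and> y \<in> N" by blast
    qed
  qed
  define W where "W = {w\<in>Y. w + p' \<in> Oj}"
  have Wo: "openin TY W" unfolding W_def by (rule A.cont_open[OF A.cont_transl2[OF p'Y] Ojo])
  have W0: "0 \<in> W" using A.zeroX p'Oj by (simp add: W_def)
  have "W \<subseteq> TY closure_of (U \<inter> Y)"
  proof
    fix w assume w: "w \<in> W"
    then have wY: "w \<in> Y" and wp: "w + p' \<in> Oj" by (auto simp: W_def)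
    show "w \<in> TY closure_of (U \<inter> Y)"
      unfolding in_closure_of
    proof (intro conjI allI impI)
      show "w \<in> topspace TY" using wY A.top by simp
      fix N assume N: "w \<in> N \<and> openin TY N"
      have "(w + p') - p' \<in> N" using N by simp
      then obtain G1 G2 where G: "openin TY G1" "openin TY G2" "w + p' \<in> G1" "p' \<in> G2"
        "\<forall>a\<in>G1. \<forall>b\<in>G2. a - b \<in> N"
        using A.diff_nbhd[of N "w + p'" p'] N A.addX[OF wY p'Y] p'Y by blast
      have "w + p' \<in> TY closure_of (V \<inter> Y)" using Ojcl wp by blast
      then obtain v1 where v1: "v1 \<in> V \<inter> Y" "v1 \<in> G1"
        using G(1,3) unfolding in_closure_of by blast
      have "p' \<in> TY closure_of (V \<inter> Y)" using Ojcl p'Oj by blast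
      then obtain v2 where v2: "v2 \<in> V \<inter> Y" "v2 \<in> G2"
        using G(2,4) unfolding in_closure_of by blast
      have "v1 - v2 \<in> U" using Vd v1 v2 by blast
      moreover have "v1 - v2 \<in> Y" using A.diffX v1 v2 by blast
      moreover have "v1 - v2 \<in> N" using G(5) v1 v2 by blast
      ultimately show "\<exists>y. y \<in> U \<inter> Y \<and> y \<in> N" by blast
    qed
  qed
  then show ?thesis using Wo W0 by blast
qed



lemma cont_step:
  assumes FY: "fks Y TY" and FX: "fks X TX" and sub: "Y \<subseteq> X"
    and U: "openin TX U" "0 \<in> U"
  shows "\<exists>W. openin TY W \<and> 0 \<in> W \<and> W \<subseteq> U"
proof -
  interpret A: fks Y TY by (rule FY)
  interpret B: fks X TX by (rule FX)
  obtain MX dX where MdX: "Metric_space MX dX" "TX = Metric_space.mtopology MX dX"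
    using B.cm unfolding completely_metrizable_space_def by blast
  have MXX: "MX = X"
  proof -
    have "topspace (Metric_space.mtopology MX dX) = MX" by (rule Metric_space.topspace_mtopology[OF MdX(1)])
    then show ?thesis using MdX(2) B.top by simp
  qed
  obtain MY dY where MdY: "Metric_space MY dY" "TY = Metric_space.mtopology MY dY"
    using A.cm unfolding completely_metrizable_space_def by blast
  have MYY: "MY = Y"
  proof -
    have "topspace (Metric_space.mtopology MY dY) = MY" by (rule Metric_space.topspace_mtopology[OF MdY(1)])
    then show ?thesis using MdY(2) A.top by simp
  qed
  interpret MX: Metric_space X dX using MdX(1) MXX by simp
  interpret MY: Metric_space Y dY using MdY(1) MYY by simp
  have TXm: "TX = MX.mtopology" using MdX(2) MXX by simp
  have TYm: "TY = MY.mtopology" using MdY(2) MYY by simp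
  obtain U0 where U0: "openin TX U0" "0 \<in> U0" "\<forall>u\<in>U0. \<forall>v\<in>U0. u + v \<in> U"
    using B.half_nbhd[OF U] by blast
  define ballX where "ballX k = {x\<in>X. dX 0 x < 1 / real (Suc k) \<and> dX 0 (- x) < 1 / real (Suc k)}" for k
  have ballXo: "openin TX (ballX k)" for k
  proof -
    have "ballX k = MX.mball 0 (1 / real (Suc k)) \<inter> {x\<in>X. - x \<in> MX.mball 0 (1 / real (Suc k))}"
      using B.zeroX B.negX by (auto simp: ballX_def)
    moreover have "openin TX (MX.mball 0 (1 / real (Suc k)))" using TXm by simp
    moreover have "openin TX {x\<in>X. - x \<in> MX.mball 0 (1 / real (Suc k))}"
      by (rule B.cont_open[OF B.cont_neg]) (simp add: TXm)
    ultimately show ?thesis by (simp add: openin_Int)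
  qed
  have ballX0: "0 \<in> ballX k" for k using B.zeroX by (simp add: ballX_def)
  define PU where "PU \<equiv> \<lambda>(k::nat) E. openin TX E \<and> (0::seq) \<in> E \<and> (k = 0 \<longrightarrow> E = U0)"
  define QU where "QU \<equiv> \<lambda>(k::nat) E E'. E' \<subseteq> E \<and> (\<forall>u\<in>E'. \<forall>v\<in>E'. u + v \<in> E) \<and> E' \<subseteq> ballX k"
  have "\<exists>E'. PU (Suc k) E' \<and> QU k E E'" if "PU k E" for k E
  proof -
    have "openin TX E" "0 \<in> E" using that unfolding PU_def by simp_all
    from B.half_nbhd[OF this]
    obtain E1 where E1: "openin TX E1" "0 \<in> E1" "E1 \<subseteq> E" "\<forall>u\<in>E1. \<forall>v\<in>E1. u + v \<in> E"
      by blast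
    have "openin TX (E1 \<inter> ballX k)" by (rule openin_Int[OF E1(1) ballXo])
    then have "PU (Suc k) (E1 \<inter> ballX k)" unfolding PU_def using E1(2) ballX0 by simp
    moreover have "QU k E (E1 \<inter> ballX k)" unfolding QU_def using E1(3,4) by blast
    ultimately show ?thesis by blast
  qed
  moreover have "PU 0 U0" using U0 unfolding PU_def by simp
  then have "\<exists>E. PU 0 E" by blast
  ultimately obtain Us where Us: "\<forall>k. PU k (Us k) \<and> QU k (Us k) (Us (Suc k))"
    using dependent_nat_choice[of PU QU] by blast
  have Uso: "openin TX (Us k)" and Us0: "0 \<in> Us k" and Us00: "Us 0 = U0" for k
    using Us unfolding PU_def by simp_all
  have Usmono: "Us (Suc k) \<subseteq> Us k" and Ushalf: "\<forall>u\<in>Us (Suc k). \<forall>v\<in>Us (Suc k). u + v \<in> Us k"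
    and Usball: "Us (Suc k) \<subseteq> ballX k" for k
    using Us unfolding QU_def by simp_all
  have Usle: "Us k \<subseteq> Us j" if "j \<le> k" for j k
    using lift_Suc_antimono_le[of Us, OF Usmono that] .
  have "\<forall>k. \<exists>W. openin TY W \<and> 0 \<in> W \<and> W \<subseteq> TY closure_of (Us k \<inter> Y) \<and> (\<forall>w\<in>W. dY 0 w < 1 / real (Suc k))"
  proof
    fix k
    obtain W where W: "openin TY W" "0 \<in> W" "W \<subseteq> TY closure_of (Us k \<inter> Y)"
      using baire_step[OF FY FX sub Uso Us0] by blast
    have "openin TY (W \<inter> MY.mball 0 (1 / real (Suc k)))" by (rule openin_Int[OF W(1)]) (simp add: TYm)
    moreover have "0 \<in> W \<inter> MY.mball 0 (1 / real (Suc k))" using W(2) A.zeroX by simp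
    moreover have "W \<inter> MY.mball 0 (1 / real (Suc k)) \<subseteq> TY closure_of (Us k \<inter> Y)" using W(3) by blast
    moreover have "\<forall>w\<in>W \<inter> MY.mball 0 (1 / real (Suc k)). dY 0 w < 1 / real (Suc k)" by simp
    ultimately show "\<exists>W. openin TY W \<and> 0 \<in> W \<and> W \<subseteq> TY closure_of (Us k \<inter> Y) \<and> (\<forall>w\<in>W. dY 0 w < 1 / real (Suc k))"
      by blast
  qed
  from choice[OF this] obtain Ws where Ws': "\<forall>k. openin TY (Ws k) \<and> 0 \<in> Ws k \<and> Ws k \<subseteq> TY closure_of (Us k \<inter> Y)
      \<and> (\<forall>w\<in>Ws k. dY 0 w < 1 / real (Suc k))"
    by blast
  have Ws: "openin TY (Ws k) \<and> 0 \<in> Ws k \<and> Ws k \<subseteq> TY closure_of (Us k \<inter> Y)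
      \<and> (\<forall>w\<in>Ws k. dY 0 w < 1 / real (Suc k))" for k using Ws' by blast
  have WsY: "Ws k \<subseteq> Y" for k using Ws[of k] openin_subset[of TY "Ws k"] A.top by simp
  have "Ws 1 \<subseteq> U"
  proof
    fix y assume y: "y \<in> Ws 1"
    define PR where "PR \<equiv> \<lambda>(k::nat) r. r \<in> Ws (Suc k) \<and> (k = 0 \<longrightarrow> r = y)"
    define QR where "QR \<equiv> \<lambda>(k::nat) r r'. r - r' \<in> Us (Suc k)"
    have "\<exists>r'. PR (Suc k) r' \<and> QR k r r'" if "PR k r" for k r
    proof -
      have r: "r \<in> Ws (Suc k)" using that by (simp add: PR_def)
      then have rY: "r \<in> Y" using WsY by blast
      define G where "G = {x\<in>Y. r - x \<in> Ws (Suc (Suc k))}"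
      have Go: "openin TY G" unfolding G_def using A.cont_open[OF A.cont_diff1[OF rY]] Ws by blast
      have "r - r = 0" by simp
      then have rG: "r \<in> G" using rY Ws[of "Suc (Suc k)"] unfolding G_def by simp
      have "r \<in> TY closure_of (Us (Suc k) \<inter> Y)" using r Ws by blast
      then obtain x where x: "x \<in> Us (Suc k) \<inter> Y" "x \<in> G"
        using Go rG unfolding in_closure_of by blast
      have "r - (r - x) = x" by simp
      then have "QR k r (r - x)" using x unfolding QR_def by simp
      moreover have "PR (Suc k) (r - x)" using x unfolding PR_def G_def by simp
      ultimately show ?thesis by blast
    qed
    moreover have "\<exists>r. PR 0 r" using y unfolding PR_def by simp
    ultimately obtain r where r: "\<forall>k. PR k (r k) \<and> QR k (r k) (r (Suc k))"
      using dependent_nat_choice[of PR QR] by blast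
    have rW: "r k \<in> Ws (Suc k)" and r0: "r 0 = y" and rstep: "r k - r (Suc k) \<in> Us (Suc k)" for k
      using r unfolding PR_def QR_def by auto
    have rY: "r k \<in> Y" for k using rW WsY by blast
    have D: "r n - r (n + i) \<in> Us n" for i n
    proof (induction i arbitrary: n)
      case 0
      have "r n - r (n + 0) = 0" by simp
      with Us0[of n] show ?case by metis
    next
      case (Suc i)
      have eq: "r n - r (n + Suc i) = (r n - r (Suc n)) + (r (Suc n) - r (Suc n + i))" by simp
      have "r (Suc n) - r (Suc n + i) \<in> Us (Suc n)" by (rule Suc.IH)
      then show ?case unfolding eq using Ushalf[of n] rstep[of n] by blast
    qed
    define s where "s k = y - r k" for k
    have yY: "y \<in> Y" using r0 rY by metis
    have sY: "s k \<in> Y" for k using A.diffX yY rY by (simp add: s_def)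
    have sX: "s k \<in> X" for k using sY sub by blast
    have sdiff: "s m - s n = r n - r m" for m n by (simp add: s_def)
    have "\<exists>N. \<forall>m\<ge>N. \<forall>n\<ge>N. s m - s n \<in> G" if G: "openin TX G" "0 \<in> G" for G
    proof -
      obtain \<rho> where \<rho>: "\<rho> > 0" "MX.mball 0 \<rho> \<subseteq> G"
        using G TXm MX.openin_mtopology by blast
      obtain N where N: "inverse (real (Suc N)) < \<rho>" using reals_Archimedean[OF \<rho>(1)] by blast
      have inball: "x \<in> G" if "x \<in> X" "dX 0 x < 1 / real (Suc N)" for x
        using that N \<rho>(2) B.zeroX by (auto simp: inverse_eq_divide)
      show ?thesis
      proof (intro exI allI impI)
        fix m n assume m: "Suc N \<le> m" and n: "Suc N \<le> n"
        show "s m - s n \<in> G"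
        proof (cases "n \<le> m")
          case True
          have "r n - r (n + (m - n)) \<in> Us n" by (rule D)
          then have "r n - r m \<in> Us (Suc N)" using True Usle[OF n] by auto
          then have "r n - r m \<in> ballX N" using Usball by blast
          then show ?thesis unfolding sdiff using inball by (simp add: ballX_def)
        next
          case False
          have "r m - r (m + (n - m)) \<in> Us m" by (rule D)
          then have "r m - r n \<in> Us (Suc N)" using False Usle[OF m] by auto
          then have "r m - r n \<in> ballX N" using Usball by blast
          then have h: "r m - r n \<in> X" "dX 0 (- (r m - r n)) < 1 / real (Suc N)"
            by (auto simp: ballX_def)
          have "- (r m - r n) \<in> X" by (rule B.negX[OF h(1)])
          note h = h this
          have "- (r m - r n) \<in> G" using inball h(2,3) by blast
          then show ?thesis unfolding sdiff by simp
        qed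
      qed
    qed
    then obtain z where z: "z \<in> X" "limitin TX s z sequentially"
      using B.cauchy_conv[of s] sX by blast
    have "limitin TY s y sequentially"
      unfolding limitin_def
    proof (intro conjI allI impI)
      show "y \<in> topspace TY" using yY A.top by simp
      fix G assume G: "openin TY G \<and> y \<in> G"
      define G' where "G' = {w\<in>Y. y - w \<in> G}"
      have G'o: "openin TY G'" unfolding G'_def using A.cont_open[OF A.cont_diff1[OF yY]] G by blast
      have "0 \<in> G'" using G A.zeroX by (simp add: G'_def)
      then obtain \<rho> where \<rho>: "\<rho> > 0" "MY.mball 0 \<rho> \<subseteq> G'"
        using G'o TYm MY.openin_mtopology by blast
      obtain K where K: "inverse (real (Suc K)) < \<rho>" using reals_Archimedean[OF \<rho>(1)] by blast
      have "s k \<in> G" if "K \<le> k" for k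
      proof -
        have "dY 0 (r k) < 1 / real (Suc (Suc k))" using Ws[of "Suc k"] rW[of k] by blast
        also have "\<dots> \<le> inverse (real (Suc K))" using that by (simp add: inverse_eq_divide frac_le)
        finally have "r k \<in> MY.mball 0 \<rho>" using K rY A.zeroX by simp
        then have "r k \<in> G'" using \<rho>(2) by blast
        then show ?thesis by (simp add: G'_def s_def)
      qed
      then show "eventually (\<lambda>k. s k \<in> G) sequentially" unfolding eventually_sequentially by blast
    qed
    then have zy: "z = y" using limit_unique_two[OF FX FY z(2)] by blast
    define H where "H = {x\<in>X. z - x \<in> U0}"
    have Ho: "openin TX H" unfolding H_def using B.cont_open[OF B.cont_diff1[OF z(1)] U0(1)] .
    have "z \<in> H" using z(1) U0(2) by (simp add: H_def)
    then obtain k where k: "s k \<in> H"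
      using z(2) Ho unfolding limitin_def eventually_sequentially by blast
    have "s k = r 0 - r (0 + k)" using r0 by (simp add: s_def)
    then have "s k \<in> U0" using D[of 0 k] Us00 by simp
    moreover have "z - s k \<in> U0" using k by (simp add: H_def)
    ultimately have "s k + (z - s k) \<in> U" using U0(3) by blast
    then show "y \<in> U" using zy by simp
  qed
  then show ?thesis using Ws[of 1] by blast
qed

lemma incl_cont:
  assumes FY: "fks Y TY" and FX: "fks X TX" and sub: "Y \<subseteq> X" and U: "openin TX U"
  shows "openin TY (U \<inter> Y)"
proof -
  interpret A: fks Y TY by (rule FY)
  interpret B: fks X TX by (rule FX)
  show ?thesis
  proof (subst openin_subopen, intro ballI)
    fix y assume y: "y \<in> U \<inter> Y"
    then have yX: "y \<in> X" "y \<in> Y" using sub by auto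
    define V0 where "V0 = {x\<in>X. y + x \<in> U}"
    have V0o: "openin TX V0" unfolding V0_def by (rule B.cont_open[OF B.cont_transl[OF yX(1)] U])
    have "0 \<in> V0" using y B.zeroX by (simp add: V0_def)
    then obtain W where W: "openin TY W" "0 \<in> W" "W \<subseteq> V0"
      using cont_step[OF FY FX sub V0o] by blast
    define N where "N = {x\<in>Y. x - y \<in> W}"
    have No: "openin TY N" unfolding N_def by (rule A.cont_open[OF A.cont_diff2[OF yX(2)] W(1)])
    have "y \<in> N" using W(2) yX by (simp add: N_def)
    moreover have "N \<subseteq> U \<inter> Y"
    proof
      fix x assume "x \<in> N"
      then have "x \<in> Y" "x - y \<in> V0" using W(3) by (auto simp: N_def)
      then have "y + (x - y) \<in> U" by (simp add: V0_def)
      then show "x \<in> U \<inter> Y" using \<open>x \<in> Y\<close> by simp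
    qed
    ultimately show "\<exists>T. openin TY T \<and> y \<in> T \<and> T \<subseteq> U \<inter> Y" using No by blast
  qed
qed



lemma sscale_of_real_mult: "sscale (complex_of_real a) (sscale (complex_of_real b) x) = sscale (complex_of_real (a*b)) x"
  by (simp add: sscale_sscale)

lemma sscale_of_real_add: "sscale (complex_of_real a) x + sscale (complex_of_real b) x = sscale (complex_of_real (a+b)) x"
  by (simp add: sscale_add_left)

lemma solve_x0:
  assumes "m1 + sscale (complex_of_real t1) x0 = m2 + sscale (complex_of_real t2) x0" "t1 \<noteq> t2"
  shows "x0 = sscale (complex_of_real (1/(t1-t2))) (m2 + sscale (complex_of_real (-1)) m1)"
proof (rule ext)
  fix i
  have e: "m1 i + complex_of_real t1 * x0 i = m2 i + complex_of_real t2 * x0 i"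
    using fun_cong[OF assms(1), of i] by (simp add: sscale_def)
  have nz: "complex_of_real t1 - complex_of_real t2 \<noteq> 0" using assms(2) by simp
  have "(complex_of_real t1 - complex_of_real t2) * x0 i = m2 i - m1 i" using e by (simp add: algebra_simps)
  then have "x0 i = (m2 i - m1 i) / (complex_of_real t1 - complex_of_real t2)"
    using nz by (simp add: field_simps)
  then show "x0 i = sscale (complex_of_real (1/(t1-t2))) (m2 + sscale (complex_of_real (-1)) m1) i"
    by (simp add: sscale_def divide_inverse mult.commute)
qed

lemma real_HB:
  assumes X0: "0 \<in> X" and Xadd: "\<And>x y. x\<in>X \<Longrightarrow> y\<in>X \<Longrightarrow> x + y \<in> X"
    and Xsc: "\<And>c x. x\<in>X \<Longrightarrow> sscale c x \<in> X"
    and PhiX: "Phi \<subseteq> X"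
    and padd: "\<And>x y. x\<in>X \<Longrightarrow> y\<in>X \<Longrightarrow> p (x + y) \<le> p x + p y"
    and phom: "\<And>x r. x\<in>X \<Longrightarrow> r > 0 \<Longrightarrow> p (sscale (complex_of_real r) x) = r * p x"
    and hadd: "\<And>x y. x\<in>Phi \<Longrightarrow> y\<in>Phi \<Longrightarrow> x + y \<in> Phi \<and> h (x+y) = h x + h y"
    and hsc: "\<And>r x. x\<in>Phi \<Longrightarrow> sscale (complex_of_real r) x \<in> Phi \<and> h (sscale (complex_of_real r) x) = r * h x"
    and hp: "\<And>x. x\<in>Phi \<Longrightarrow> h x \<le> p x"
    and Phi0: "0 \<in> Phi"
  shows "\<exists>F. (\<forall>x\<in>X. \<forall>y\<in>X. F (x+y) = F x + F y) \<and> (\<forall>r. \<forall>x\<in>X. F (sscale (complex_of_real r) x) = r * F x)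
     \<and> (\<forall>x\<in>X. F x \<le> p x) \<and> (\<forall>x\<in>Phi. F x = h x)"
proof -
  define ok where "ok G \<longleftrightarrow> (\<forall>x a b. (x,a)\<in>G \<longrightarrow> (x,b)\<in>G \<longrightarrow> a = b)
     \<and> (\<forall>x a. (x,a)\<in>G \<longrightarrow> x \<in> X \<and> a \<le> p x) \<and> (\<forall>x\<in>Phi. (x, h x) \<in> G)
     \<and> (\<forall>x a y b. (x,a)\<in>G \<longrightarrow> (y,b)\<in>G \<longrightarrow> (x+y, a+b) \<in> G)
     \<and> (\<forall>x a r. (x,a)\<in>G \<longrightarrow> (sscale (complex_of_real r) x, r*a) \<in> G)" for G :: "(seq \<times> real) set"
  define G0 where "G0 = {(x, h x) | x. x \<in> Phi}"
  have okG0: "ok G0"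
    unfolding ok_def G0_def using PhiX hp hadd hsc by auto
  have "\<forall>C\<in>chains {G. ok G}. \<exists>U\<in>{G. ok G}. \<forall>G\<in>C. G \<subseteq> U"
  proof
    fix C assume C: "C \<in> chains {G. ok G}"
    then have Cok: "\<And>G. G \<in> C \<Longrightarrow> ok G" and Cch: "\<And>G1 G2. G1 \<in> C \<Longrightarrow> G2 \<in> C \<Longrightarrow> G1 \<subseteq> G2 \<or> G2 \<subseteq> G1"
      unfolding chains_def chain_subset_def by auto
    show "\<exists>U\<in>{G. ok G}. \<forall>G\<in>C. G \<subseteq> U"
    proof (cases "C = {}")
      case True then show ?thesis using okG0 by auto
    next
      case False
      have two: "\<exists>G\<in>C. p1 \<in> G \<and> p2 \<in> G" if h12: "p1 \<in> \<Union>C" "p2 \<in> \<Union>C" for p1 p2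
      proof -
        obtain G1 G2 where "G1 \<in> C" "G2 \<in> C" "p1 \<in> G1" "p2 \<in> G2" using h12 by blast
        then show ?thesis using Cch[of G1 G2] by blast
      qed
      have "ok (\<Union>C)"
        unfolding ok_def
      proof (intro conjI allI impI ballI)
        fix x a b assume "(x,a) \<in> \<Union>C" "(x,b) \<in> \<Union>C"
        then obtain G where "G \<in> C" "(x,a) \<in> G" "(x,b) \<in> G" using two by blast
        then show "a = b" using Cok unfolding ok_def by blast
      next
        fix x a assume "(x,a) \<in> \<Union>C"
        then obtain G where "G \<in> C" "(x,a) \<in> G" by blast
        then show "x \<in> X" "a \<le> p x" using Cok unfolding ok_def by blast+
      next
        fix x assume "x \<in> Phi"
        obtain G where "G \<in> C" using False by blast
        then show "(x, h x) \<in> \<Union>C" using Cok \<open>x \<in> Phi\<close> unfolding ok_def by blast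
      next
        fix x a y b assume "(x,a) \<in> \<Union>C" "(y,b) \<in> \<Union>C"
        then obtain G where "G \<in> C" "(x,a) \<in> G" "(y,b) \<in> G" using two by blast
        then show "(x+y, a+b) \<in> \<Union>C" using Cok unfolding ok_def by blast
      next
        fix x a r assume "(x,a) \<in> \<Union>C"
        then obtain G where "G \<in> C" "(x,a) \<in> G" by blast
        then show "(sscale (complex_of_real r) x, r*a) \<in> \<Union>C" using Cok unfolding ok_def by blast
      qed
      then show ?thesis by blast
    qed
  qed
  from Zorn_Lemma2[OF this] obtain Gm where Gm: "ok Gm" and maxi: "\<And>G. ok G \<Longrightarrow> Gm \<subseteq> G \<Longrightarrow> G = Gm"
    by blast
  have gfun: "\<And>x a b. (x,a)\<in>Gm \<Longrightarrow> (x,b)\<in>Gm \<Longrightarrow> a = b"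
    and bnd: "\<And>x a. (x,a)\<in>Gm \<Longrightarrow> x \<in> X \<and> a \<le> p x"
    and base: "\<And>x. x\<in>Phi \<Longrightarrow> (x, h x) \<in> Gm"
    and gadd: "\<And>x a y b. (x,a)\<in>Gm \<Longrightarrow> (y,b)\<in>Gm \<Longrightarrow> (x+y, a+b) \<in> Gm"
    and gsc: "\<And>x a r. (x,a)\<in>Gm \<Longrightarrow> (sscale (complex_of_real r) x, r*a) \<in> Gm"
    using Gm unfolding ok_def by blast+
  have g00: "(0, 0) \<in> Gm" using gsc[OF base[OF Phi0], of 0] by simp
  have total: "\<exists>a. (x0, a) \<in> Gm" if x0: "x0 \<in> X" for x0
  proof (rule ccontr)
    assume nx: "\<not> (\<exists>a. (x0, a) \<in> Gm)"
    define L where "L = {a - p (m + sscale (complex_of_real (-1)) x0) | m a. (m,a) \<in> Gm}"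
    have key: "a - p (m + sscale (complex_of_real (-1)) x0) \<le> p (m' + x0) - a'"
      if "(m,a) \<in> Gm" "(m',a') \<in> Gm" for m a m' a'
    proof -
      have mX: "m \<in> X" "m' \<in> X" using bnd that by blast+
      have "a + a' \<le> p (m + m')" using bnd[OF gadd[OF that]] by blast
      also have "m + m' = (m + sscale (complex_of_real (-1)) x0) + (m' + x0)"
        by (rule ext) (simp add: sscale_def)
      also have "p \<dots> \<le> p (m + sscale (complex_of_real (-1)) x0) + p (m' + x0)"
        using padd Xadd Xsc mX x0 by blast
      finally show ?thesis by simp
    qed
    have Lne: "L \<noteq> {}" using g00 unfolding L_def by blast
    have Lbdd: "bdd_above L"
      unfolding bdd_above_def L_def using key[OF _ g00] by (intro exI[of _ "p (0 + x0) - 0"]) auto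
    define c where "c = Sup L"
    have cge: "a - p (m + sscale (complex_of_real (-1)) x0) \<le> c" if "(m,a) \<in> Gm" for m a
      unfolding c_def using Lbdd that by (intro cSup_upper) (auto simp: L_def)
    have cle: "c \<le> p (m' + x0) - a'" if "(m',a') \<in> Gm" for m' a'
    proof -
      have "\<forall>z\<in>L. z \<le> p (m' + x0) - a'" unfolding L_def using key[OF _ that] by blast
      then show ?thesis unfolding c_def using Lne by (intro cSup_least) auto
    qed
    define G' where "G' = {(m + sscale (complex_of_real t) x0, a + t * c) | m a t. (m,a) \<in> Gm}"
    have okG': "ok G'"
      unfolding ok_def
    proof (intro conjI allI impI ballI)
      fix x a b assume "(x,a) \<in> G'" "(x,b) \<in> G'"
      then obtain m1 a1 t1 m2 a2 t2 where A: "(m1,a1) \<in> Gm" "(m2,a2) \<in> Gm"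
        "x = m1 + sscale (complex_of_real t1) x0" "a = a1 + t1 * c"
        "x = m2 + sscale (complex_of_real t2) x0" "b = a2 + t2 * c"
        unfolding G'_def by blast
      have eq: "m1 + sscale (complex_of_real t1) x0 = m2 + sscale (complex_of_real t2) x0" using A by simp
      have tt: "t1 = t2"
      proof (rule ccontr)
        assume "t1 \<noteq> t2"
        from solve_x0[OF eq this] have "x0 = sscale (complex_of_real (1/(t1-t2))) (m2 + sscale (complex_of_real (-1)) m1)" .
        moreover have "(sscale (complex_of_real (1/(t1-t2))) (m2 + sscale (complex_of_real (-1)) m1),
            (1/(t1-t2)) * (a2 + (-1) * a1)) \<in> Gm"
          using gsc[OF gadd[OF A(2) gsc[OF A(1)]]] by blast
        ultimately show False using nx by metis
      qed
      then have "m1 = m2" using eq by simp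
      then show "a = b" using A gfun tt by metis
    next
      fix x a assume "(x,a) \<in> G'"
      then obtain m a0 t where A: "(m,a0) \<in> Gm" "x = m + sscale (complex_of_real t) x0" "a = a0 + t * c"
        unfolding G'_def by blast
      have mX: "m \<in> X" using bnd A by blast
      show "x \<in> X" using A mX Xadd Xsc x0 by simp
      show "a \<le> p x"
      proof (cases t "0::real" rule: linorder_cases)
        case equal then show ?thesis using A bnd by simp
      next
        case greater
        have "(sscale (complex_of_real (1/t)) m, (1/t) * a0) \<in> Gm" using gsc[OF A(1)] .
        from cle[OF this] have "t * c \<le> t * (p (sscale (complex_of_real (1/t)) m + x0) - (1/t) * a0)"
          using greater by (simp add: mult_left_mono)
        also have "\<dots> = t * p (sscale (complex_of_real (1/t)) m + x0) - a0" using greater by (simp add: algebra_simps)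
        also have "t * p (sscale (complex_of_real (1/t)) m + x0) = p (sscale (complex_of_real t) (sscale (complex_of_real (1/t)) m + x0))"
          using phom[of "sscale (complex_of_real (1/t)) m + x0" t] greater Xadd Xsc mX x0 by simp
        also have "sscale (complex_of_real t) (sscale (complex_of_real (1/t)) m + x0) = x"
          using A(2) greater by (simp add: sscale_add sscale_sscale)
        finally show ?thesis using A(3) by simp
      next
        case less
        define s where "s = - t"
        have s: "s > 0" using less by (simp add: s_def)
        have "(sscale (complex_of_real (1/s)) m, (1/s) * a0) \<in> Gm" using gsc[OF A(1)] .
        from cge[OF this] have "s * ((1/s) * a0 - p (sscale (complex_of_real (1/s)) m + sscale (complex_of_real (-1)) x0)) \<le> s * c"
          using s by (simp add: mult_left_mono)
        then have "a0 - s * p (sscale (complex_of_real (1/s)) m + sscale (complex_of_real (-1)) x0) \<le> s * c"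
          using s by (simp add: algebra_simps)
        also have "s * p (sscale (complex_of_real (1/s)) m + sscale (complex_of_real (-1)) x0)
            = p (sscale (complex_of_real s) (sscale (complex_of_real (1/s)) m + sscale (complex_of_real (-1)) x0))"
          using phom[of "sscale (complex_of_real (1/s)) m + sscale (complex_of_real (-1)) x0" s] s Xadd Xsc mX x0 by simp
        also have "sscale (complex_of_real s) (sscale (complex_of_real (1/s)) m + sscale (complex_of_real (-1)) x0) = x"
          using A(2) s by (simp add: sscale_add sscale_sscale s_def)
        finally show ?thesis using A(3) by (simp add: s_def)
      qed
    next
      fix x assume "x \<in> Phi"
      then have "(x + sscale (complex_of_real 0) x0, h x + 0 * c) \<in> G'"
        unfolding G'_def using base by blast
      then show "(x, h x) \<in> G'" by simp
    next
      fix x a y b assume "(x,a) \<in> G'" "(y,b) \<in> G'"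
      then obtain m1 a1 t1 m2 a2 t2 where A: "(m1,a1) \<in> Gm" "(m2,a2) \<in> Gm"
        "x = m1 + sscale (complex_of_real t1) x0" "a = a1 + t1 * c"
        "y = m2 + sscale (complex_of_real t2) x0" "b = a2 + t2 * c"
        unfolding G'_def by blast
      have "x + y = (m1 + m2) + sscale (complex_of_real (t1 + t2)) x0"
        using A by (simp add: sscale_add_left[symmetric] algebra_simps)
      moreover have "a + b = (a1 + a2) + (t1 + t2) * c" using A by (simp add: algebra_simps)
      ultimately show "(x+y, a+b) \<in> G'" unfolding G'_def using gadd[OF A(1,2)] by blast
    next
      fix x a r assume "(x,a) \<in> G'"
      then obtain m a0 t where A: "(m,a0) \<in> Gm" "x = m + sscale (complex_of_real t) x0" "a = a0 + t * c"
        unfolding G'_def by blast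
      have "sscale (complex_of_real r) x = sscale (complex_of_real r) m + sscale (complex_of_real (r*t)) x0"
        using A by (simp add: sscale_add sscale_sscale)
      moreover have "r * a = r * a0 + (r * t) * c" using A by (simp add: algebra_simps)
      ultimately show "(sscale (complex_of_real r) x, r * a) \<in> G'" unfolding G'_def using gsc[OF A(1)] by blast
    qed
    have "Gm \<subseteq> G'"
    proof
      fix z assume "z \<in> Gm"
      then obtain m a where z: "z = (m,a)" "(m,a) \<in> Gm" by (cases z) auto
      then have "(m + sscale (complex_of_real 0) x0, a + 0 * c) \<in> G'" unfolding G'_def by blast
      then show "z \<in> G'" using z by simp
    qed
    then have "G' = Gm" using maxi okG' by blast
    moreover have "(0 + sscale (complex_of_real 1) x0, 0 + 1 * c) \<in> G'" unfolding G'_def using g00 by blast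
    ultimately have "(x0, c) \<in> Gm" by simp
    then show False using nx by blast
  qed
  define F where "F x = (SOME a. (x,a) \<in> Gm)" for x
  have FG: "(x, F x) \<in> Gm" if "x \<in> X" for x
    unfolding F_def using total[OF that] by (rule someI_ex)
  show ?thesis
  proof (intro exI[of _ F] conjI ballI allI)
    fix x y assume "x \<in> X" "y \<in> X"
    show "F (x+y) = F x + F y" using gfun[OF FG[OF Xadd[OF \<open>x\<in>X\<close> \<open>y\<in>X\<close>]] gadd[OF FG[OF \<open>x\<in>X\<close>] FG[OF \<open>y\<in>X\<close>]]] .
  next
    fix r x assume "x \<in> X"
    show "F (sscale (complex_of_real r) x) = r * F x" using gfun[OF FG[OF Xsc[OF \<open>x\<in>X\<close>]] gsc[OF FG[OF \<open>x\<in>X\<close>]]] .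
  next
    fix x assume "x \<in> X"
    show "F x \<le> p x" using bnd[OF FG[OF \<open>x\<in>X\<close>]] by blast
  next
    fix x assume "x \<in> Phi"
    then have "x \<in> X" using PhiX by blast
    show "F x = h x" using gfun[OF FG[OF \<open>x\<in>X\<close>] base[OF \<open>x\<in>Phi\<close>]] .
  qed
qed



lemma cmap_ofreal:
  assumes "continuous_map T euclideanreal h"
  shows "continuous_map T euclidean (\<lambda>x. c * complex_of_real (h x))"
  using assms unfolding continuous_map_atin by (simp add: tendsto_mult_left tendsto_of_real)

lemma complex_HB:
  assumes FX: "fks X T"
    and LC: "\<forall>U. openin T U \<and> (\<lambda>i. 0) \<in> U \<longrightarrow>
        (\<exists>V. openin T V \<and> (\<lambda>i. 0) \<in> V \<and> V \<subseteq> U \<and>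
             (\<forall>x\<in>V. \<forall>y\<in>V. \<forall>t::real. 0 \<le> t \<and> t \<le> 1 \<longrightarrow>
                 sadd (sscale (complex_of_real t) x) (sscale (complex_of_real (1 - t)) y) \<in> V))"
    and PhiX: "Phi \<subseteq> X" and Phi0: "0 \<in> Phi"
    and Phiadd: "\<And>x y. x\<in>Phi \<Longrightarrow> y\<in>Phi \<Longrightarrow> x + y \<in> Phi"
    and Phisc: "\<And>c x. x\<in>Phi \<Longrightarrow> sscale c x \<in> Phi"
    and gadd: "\<And>x y. x\<in>Phi \<Longrightarrow> y\<in>Phi \<Longrightarrow> g (x + y) = g x + g y"
    and gsc: "\<And>c x. x\<in>Phi \<Longrightarrow> g (sscale c x) = c * g x"
    and gc: "continuous_map (subtopology T Phi) euclidean g"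
  shows "\<exists>f\<in>cdual X T. \<forall>x\<in>Phi. f x = g x"
proof -
  interpret fks X T by (rule FX)
  have g0: "g 0 = 0" using gsc[OF Phi0, of 0] by simp
  have "openin (subtopology T Phi) {x \<in> topspace (subtopology T Phi). g x \<in> ball 0 1}"
    using openin_continuous_map_preimage[OF gc, of "ball 0 1"] by simp
  moreover have "topspace (subtopology T Phi) = Phi" using PhiX top by auto
  ultimately obtain O1 where O1: "openin T O1" "{x \<in> Phi. g x \<in> ball 0 1} = O1 \<inter> Phi"
    unfolding openin_subtopology by auto
  have "0 \<in> {x \<in> Phi. g x \<in> ball 0 1}" using Phi0 g0 by simp
  then have "0 \<in> O1" unfolding O1(2) by blast
  then have "openin T O1 \<and> (\<lambda>i. 0) \<in> O1" using O1(1) by (simp add: zero_seq)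
  from LC[rule_format, OF this] obtain V where V: "openin T V" "(\<lambda>i. 0) \<in> V" "V \<subseteq> O1"
    and Vconv': "\<forall>x\<in>V. \<forall>y\<in>V. \<forall>t::real. 0 \<le> t \<and> t \<le> 1 \<longrightarrow>
                 sadd (sscale (complex_of_real t) x) (sscale (complex_of_real (1 - t)) y) \<in> V"
    by blast
  have Vconv: "\<forall>x\<in>V. \<forall>y\<in>V. \<forall>t::real. 0 \<le> t \<and> t \<le> 1 \<longrightarrow>
                 sscale (complex_of_real t) x + sscale (complex_of_real (1 - t)) y \<in> V"
    using Vconv' by (simp only: sadd_eq)
  note V = V[unfolded zero_seq]
  have VX: "V \<subseteq> X" using openin_subset[OF V(1)] top by simp
  define S where "S x = {t::real. t > 0 \<and> sscale (complex_of_real (1/t)) x \<in> V}" for x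
  define p where "p x = Inf (S x)" for x
  have Sne: "S x \<noteq> {}" if xX: "x \<in> X" for x
  proof -
    obtain e where e: "e > 0" "\<forall>c. cmod c < e \<longrightarrow> sscale c x \<in> V" using absorb[OF xX V(1,2)] by blast
    have "cmod (complex_of_real (1 / (2/e))) < e" using e(1) by simp
    then have "2/e \<in> S x" using e unfolding S_def by simp
    then show ?thesis by blast
  qed
  have Sbdd: "bdd_below (S x)" for x unfolding S_def bdd_below_def by (intro exI[of _ 0]) auto
  have Spos: "t \<in> S x \<Longrightarrow> t > 0" for t x by (simp add: S_def)
  have pnn: "0 \<le> p x" if "x \<in> X" for x
    unfolding p_def using Sne[OF that] by (rule cInf_greatest) (simp add: S_def)
  have Sadd: "s + t \<in> S (x + y)" if st: "s \<in> S x" "t \<in> S y" for s t x y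
  proof -
    have s: "s > 0" and t: "t > 0" using st by (simp_all add: S_def)
    define l where "l = s / (s + t)"
    have l: "0 \<le> l" "l \<le> 1" using s t by (simp_all add: l_def)
    have e1: "l * (1/s) = 1/(s+t)" using s t by (simp add: l_def)
    have e2: "(1 - l) * (1/t) = 1/(s+t)" using s t by (simp add: l_def field_simps)
    have "sscale (complex_of_real l) (sscale (complex_of_real (1/s)) x) + sscale (complex_of_real (1 - l)) (sscale (complex_of_real (1/t)) y) \<in> V"
      using Vconv st l unfolding S_def by blast
    also have "sscale (complex_of_real l) (sscale (complex_of_real (1/s)) x) + sscale (complex_of_real (1 - l)) (sscale (complex_of_real (1/t)) y)
        = sscale (complex_of_real (1/(s+t))) (x + y)"
      by (simp only: sscale_of_real_mult e1 e2 sscale_add)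
    finally show ?thesis using s t unfolding S_def by simp
  qed
  have padd: "p (x + y) \<le> p x + p y" if xy: "x \<in> X" "y \<in> X" for x y
  proof (rule ccontr)
    assume "\<not> ?thesis"
    then have lt: "p x + p y < p (x + y)" by simp
    define e where "e = p (x + y) - p x - p y"
    have e: "e > 0" using lt by (simp add: e_def)
    obtain s where s: "s \<in> S x" "s < p x + e/2"
      using cInf_lessD[OF Sne[OF xy(1)], of "p x + e/2"] e unfolding p_def by auto
    obtain t where t: "t \<in> S y" "t < p y + e/2"
      using cInf_lessD[OF Sne[OF xy(2)], of "p y + e/2"] e unfolding p_def by auto
    have "p (x + y) \<le> s + t" unfolding p_def using Sadd[OF s(1) t(1)] Sbdd by (rule cInf_lower)
    moreover have "s + t < p x + p y + e" using s(2) t(2) by linarith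
    ultimately show False unfolding e_def by linarith
  qed
  have Shom1: "r * t \<in> S (sscale (complex_of_real r) x)" if "t \<in> S x" "r > 0" for t r x
  proof -
    have t: "t > 0" using that by (simp add: S_def)
    have nz: "complex_of_real r \<noteq> 0" "complex_of_real t \<noteq> 0" using that(2) t by simp_all
    have "sscale (complex_of_real (1/(r*t))) (sscale (complex_of_real r) x) = sscale (complex_of_real (1/t)) x"
      using nz by (intro ext) (simp add: sscale_def field_simps)
    then show ?thesis using that t unfolding S_def by simp
  qed
  have Shom2: "t / r \<in> S x" if "t \<in> S (sscale (complex_of_real r) x)" "r > 0" for t r x
  proof -
    have t: "t > 0" using that by (simp add: S_def)
    have nz: "complex_of_real r \<noteq> 0" "complex_of_real t \<noteq> 0" using that(2) t by simp_all
    have "sscale (complex_of_real (1/(t/r))) x = sscale (complex_of_real (1/t)) (sscale (complex_of_real r) x)"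
      using nz by (intro ext) (simp add: sscale_def field_simps)
    then show ?thesis using that t unfolding S_def by simp
  qed
  have phom: "p (sscale (complex_of_real r) x) = r * p x" if "x \<in> X" "r > 0" for x r
  proof (rule antisym)
    have "p (sscale (complex_of_real r) x) / r \<le> p x"
      unfolding p_def
    proof (rule cInf_greatest[OF Sne[OF that(1)]])
      fix t assume "t \<in> S x"
      then have "Inf (S (sscale (complex_of_real r) x)) \<le> r * t" using Shom1 Sbdd that(2) by (intro cInf_lower) auto
      then show "Inf (S (sscale (complex_of_real r) x)) / r \<le> t" using that(2) by (simp add: divide_le_eq mult.commute)
    qed
    then show "p (sscale (complex_of_real r) x) \<le> r * p x" using that(2) by (simp add: divide_le_eq mult.commute)
  next
    show "r * p x \<le> p (sscale (complex_of_real r) x)"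
      unfolding p_def
    proof (rule cInf_greatest[OF Sne[OF scX[OF that(1)]]])
      fix t assume "t \<in> S (sscale (complex_of_real r) x)"
      then have "Inf (S x) \<le> t / r" using Shom2 Sbdd that(2) by (intro cInf_lower) auto
      then show "r * Inf (S x) \<le> t" using that(2) by (simp add: le_divide_eq mult.commute)
    qed
  qed
  have pV: "p v \<le> 1" if "v \<in> V" for v
  proof -
    have "1 \<in> S v" using that by (simp add: S_def)
    then show ?thesis unfolding p_def using Sbdd by (rule cInf_lower)
  qed
  have pPhi: "Re (g x) \<le> p x" if x: "x \<in> Phi" for x
    unfolding p_def
  proof (rule cInf_greatest[OF Sne])
    show "x \<in> X" using x PhiX by blast
    fix t assume t: "t \<in> S x"
    then have tp: "t > 0" and tv: "sscale (complex_of_real (1/t)) x \<in> V" by (simp_all add: S_def)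
    have "sscale (complex_of_real (1/t)) x \<in> O1 \<inter> Phi" using tv V(3) Phisc[OF x] by blast
    then have "cmod (g (sscale (complex_of_real (1/t)) x)) < 1" using O1(2) by auto
    then have "cmod (g x / complex_of_real t) < 1" using gsc[OF x] by simp
    then have "cmod (g x) / t < 1" using tp by (simp add: norm_divide)
    then have "cmod (g x) < t" using tp by (simp add: divide_less_eq)
    then show "Re (g x) \<le> t" using complex_Re_le_cmod[of "g x"] by linarith
  qed
  obtain F where Fadd: "\<forall>x\<in>X. \<forall>y\<in>X. F (x+y) = F x + F y"
    and Fsc: "\<forall>r. \<forall>x\<in>X. F (sscale (complex_of_real r) x) = r * F x"
    and Fp: "\<forall>x\<in>X. F x \<le> p x" and Fg: "\<forall>x\<in>Phi. F x = Re (g x)"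
  proof -
    have "\<exists>F. (\<forall>x\<in>X. \<forall>y\<in>X. F (x+y) = F x + F y) \<and> (\<forall>r. \<forall>x\<in>X. F (sscale (complex_of_real r) x) = r * F x)
     \<and> (\<forall>x\<in>X. F x \<le> p x) \<and> (\<forall>x\<in>Phi. F x = Re (g x))"
    proof (rule real_HB[where Phi=Phi and h="\<lambda>x. Re (g x)"])
      show "0 \<in> X" by (rule zeroX)
      show "\<And>x y. x\<in>X \<Longrightarrow> y\<in>X \<Longrightarrow> x + y \<in> X" by (rule addX)
      show "\<And>c x. x\<in>X \<Longrightarrow> sscale c x \<in> X" by (rule scX)
      show "Phi \<subseteq> X" by (rule PhiX)
      show "\<And>x y. x\<in>X \<Longrightarrow> y\<in>X \<Longrightarrow> p (x + y) \<le> p x + p y" by (rule padd)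
      show "\<And>x r. x\<in>X \<Longrightarrow> r > 0 \<Longrightarrow> p (sscale (complex_of_real r) x) = r * p x" by (rule phom)
      show "\<And>x y. x\<in>Phi \<Longrightarrow> y\<in>Phi \<Longrightarrow> x + y \<in> Phi \<and> Re (g (x+y)) = Re (g x) + Re (g y)"
        using Phiadd gadd by simp
      show "\<And>r x. x\<in>Phi \<Longrightarrow> sscale (complex_of_real r) x \<in> Phi \<and> Re (g (sscale (complex_of_real r) x)) = r * Re (g x)"
        using Phisc gsc by simp
      show "\<And>x. x\<in>Phi \<Longrightarrow> Re (g x) \<le> p x" by (rule pPhi)
      show "0 \<in> Phi" by (rule Phi0)
    qed
    then show ?thesis using that by blast
  qed
  have Fneg: "F (x - y) = F x - F y" if "x \<in> X" "y \<in> X" for x y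
  proof -
    have e: "x - y = x + sscale (complex_of_real (-1)) y" by (simp add: sscale_m1)
    have yX': "sscale (complex_of_real (-1)) y \<in> X" using scX that(2) by blast
    have "F (x + sscale (complex_of_real (-1)) y) = F x + F (sscale (complex_of_real (-1)) y)"
      using Fadd that(1) yX' by blast
    also have "F (sscale (complex_of_real (-1)) y) = (-1) * F y" using Fsc that(2) by blast
    also have "F x + (-1) * F y = F x - F y" by simp
    finally show ?thesis unfolding e .
  qed
  have Fc: "continuous_map T euclideanreal F"
    unfolding continuous_map_def
  proof (intro conjI allI impI)
    show "F \<in> topspace T \<rightarrow> topspace euclideanreal" by simp
    fix U :: "real set" assume "openin euclideanreal U"
    then have oU: "open U" by simp
    show "openin T {x \<in> topspace T. F x \<in> U}"
    proof (subst openin_subopen, intro ballI)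
      fix x0 assume x0: "x0 \<in> {x \<in> topspace T. F x \<in> U}"
      then have x0X: "x0 \<in> X" and Fx0: "F x0 \<in> U" using top by auto
      obtain e where e: "e > 0" "ball (F x0) e \<subseteq> U" using oU Fx0 open_contains_ball by blast
      define k where "k = 2 / e"
      have k: "k > 0" using e by (simp add: k_def)
      define N where "N = {y\<in>X. sscale (complex_of_real k) (y - x0) \<in> V} \<inter> {y\<in>X. sscale (complex_of_real k) (x0 - y) \<in> V}"
      have "openin T {y\<in>X. (sscale (complex_of_real k) \<circ> (\<lambda>y. y - x0)) y \<in> V}"
        by (rule cont_open[OF continuous_map_compose[OF cont_diff2[OF x0X] scc] V(1)])
      moreover have "openin T {y\<in>X. (sscale (complex_of_real k) \<circ> (\<lambda>y. x0 - y)) y \<in> V}"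
        by (rule cont_open[OF continuous_map_compose[OF cont_diff1[OF x0X] scc] V(1)])
      ultimately have No: "openin T N" unfolding N_def by (simp add: openin_Int o_def)
      have "x0 \<in> N" using x0X V(2) by (simp add: N_def)
      moreover have "N \<subseteq> {x \<in> topspace T. F x \<in> U}"
      proof
        fix y assume y: "y \<in> N"
        then have yX: "y \<in> X" by (simp add: N_def)
        have bound: "F z \<le> e/2" if z: "z \<in> X" "sscale (complex_of_real k) z \<in> V" for z
        proof -
          have ez: "z = sscale (complex_of_real (1/k)) (sscale (complex_of_real k) z)"
          proof -
            have "complex_of_real k \<noteq> 0" using k by simp
            then show ?thesis by (intro ext) (simp add: sscale_def field_simps)
          qed
          have "p (sscale (complex_of_real (1/k)) (sscale (complex_of_real k) z)) = (1/k) * p (sscale (complex_of_real k) z)"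
            by (rule phom[OF scX[OF z(1)]]) (simp add: k)
          then have pz: "p z = (1/k) * p (sscale (complex_of_real k) z)"
            by (simp only: ez[symmetric])
          have "F z \<le> p z" using Fp z by blast
          also have "\<dots> = (1/k) * p (sscale (complex_of_real k) z)" by (rule pz)
          also have "\<dots> \<le> (1/k) * 1" using pV[OF z(2)] k by (intro mult_left_mono) simp_all
          finally show ?thesis by (simp add: k_def)
        qed
        have "F (y - x0) \<le> e/2" using bound[OF diffX[OF yX x0X]] y by (simp add: N_def)
        moreover have "F (x0 - y) \<le> e/2" using bound[OF diffX[OF x0X yX]] y by (simp add: N_def)
        ultimately have "\<bar>F y - F x0\<bar> < e" using Fneg[OF yX x0X] Fneg[OF x0X yX] e(1) by linarith
        then have "F y \<in> ball (F x0) e" by (simp add: dist_real_def abs_minus_commute)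
        then show "y \<in> {x \<in> topspace T. F x \<in> U}" using e(2) yX top by auto
      qed
      ultimately show "\<exists>T'. openin T T' \<and> x0 \<in> T' \<and> T' \<subseteq> {x \<in> topspace T. F x \<in> U}" using No by blast
    qed
  qed
  define f where "f x = complex_of_real (F x) - \<i> * complex_of_real (F (sscale \<i> x))" for x
  have fc: "continuous_map T euclidean f"
  proof -
    have "continuous_map T euclidean (\<lambda>x. 1 * complex_of_real (F x))" by (rule cmap_ofreal[OF Fc])
    moreover have "continuous_map T euclideanreal (\<lambda>x. F (sscale \<i> x))"
      using continuous_map_compose[OF scc Fc] by (simp add: o_def)
    then have "continuous_map T euclidean (\<lambda>x. \<i> * complex_of_real (F (sscale \<i> x)))" by (rule cmap_ofreal)
    ultimately show ?thesis unfolding f_def using continuous_map_diff by fastforce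
  qed
  have Fc2: "F (sscale c x) = Re c * F x + Im c * F (sscale \<i> x)" if "x \<in> X" for c x
  proof -
    have "sscale c x = sscale (complex_of_real (Re c)) x + sscale (complex_of_real (Im c)) (sscale \<i> x)"
    proof (rule ext)
      fix i
      have "c * x i = (complex_of_real (Re c) + \<i> * complex_of_real (Im c)) * x i" using complex_eq[of c] by simp
      then show "sscale c x i = (sscale (complex_of_real (Re c)) x + sscale (complex_of_real (Im c)) (sscale \<i> x)) i"
        by (simp add: sscale_def algebra_simps)
    qed
    then show ?thesis using Fadd Fsc scX that by simp
  qed
  have fadd: "f (x + y) = f x + f y" if "x \<in> X" "y \<in> X" for x y
    using Fadd that scX by (simp add: f_def sscale_add algebra_simps)
  have fsc: "f (sscale c x) = c * f x" if "x \<in> X" for c x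
  proof -
    have "F (sscale \<i> (sscale c x)) = Re (\<i> * c) * F x + Im (\<i> * c) * F (sscale \<i> x)"
      using Fc2[OF that, of "\<i> * c"] by (simp add: sscale_sscale)
    then have "f (sscale c x) = complex_of_real (Re c * F x + Im c * F (sscale \<i> x))
        - \<i> * complex_of_real (- Im c * F x + Re c * F (sscale \<i> x))"
      unfolding f_def using Fc2[OF that, of c] by simp
    also have "\<dots> = c * f x" unfolding f_def by (simp add: complex_eq_iff algebra_simps)
    finally show ?thesis .
  qed
  have fg: "f x = g x" if "x \<in> Phi" for x
  proof -
    have "F x = Re (g x)" using Fg that by blast
    moreover have "F (sscale \<i> x) = - Im (g x)" using Fg Phisc[OF that] gsc[OF that] by simp
    ultimately show ?thesis unfolding f_def by (simp add: complex_eq_iff)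
  qed
  have "f \<in> cdual X T"
    unfolding cdual_def sadd_eq using fadd fsc fc by blast
  then show ?thesis using fg by blast
qed



lemma phi_sum: "finite F \<Longrightarrow> (\<Sum>j\<in>F. c j * delta j i) = (if i \<in> F then c i else 0)"
proof -
  assume F: "finite F"
  have "(\<Sum>j\<in>F. c j * delta j i) = (\<Sum>j\<in>F. if i = j then c j else 0)"
    by (rule sum.cong) (auto simp: delta_def)
  also have "\<dots> = (if i \<in> F then c i else 0)" using F by simp
  finally show ?thesis .
qed

lemma phi_eq: "phi = {x. \<exists>F. finite F \<and> (\<forall>i. i \<notin> F \<longrightarrow> x i = 0)}"
proof (intro set_eqI iffI)
  fix x assume "x \<in> phi"
  then obtain F c where F: "finite F" "x = (\<lambda>i. \<Sum>j\<in>F. c j * delta j i)" unfolding phi_def by blast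
  then have "\<forall>i. i \<notin> F \<longrightarrow> x i = 0" using phi_sum by simp
  then show "x \<in> {x. \<exists>F. finite F \<and> (\<forall>i. i \<notin> F \<longrightarrow> x i = 0)}" using F by blast
next
  fix x :: seq assume "x \<in> {x. \<exists>F. finite F \<and> (\<forall>i. i \<notin> F \<longrightarrow> x i = 0)}"
  then obtain F where F: "finite F" "\<forall>i. i \<notin> F \<longrightarrow> x i = 0" by blast
  have "x = (\<lambda>i. \<Sum>j\<in>F. x j * delta j i)"
    using F by (intro ext) (simp add: phi_sum)
  then show "x \<in> phi" unfolding phi_def using F(1) by blast
qed

lemma delta_phi: "delta j \<in> phi"
  unfolding phi_eq by (intro CollectI exI[of _ "{j}"]) (simp add: delta_def)

lemma phi_0: "0 \<in> phi" unfolding phi_eq by auto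

lemma phi_add: "x \<in> phi \<Longrightarrow> y \<in> phi \<Longrightarrow> x + y \<in> phi"
proof -
  assume "x \<in> phi" "y \<in> phi"
  then obtain F G where "finite F" "\<forall>i. i \<notin> F \<longrightarrow> x i = 0" "finite G" "\<forall>i. i \<notin> G \<longrightarrow> y i = 0"
    unfolding phi_eq by blast
  then show "x + y \<in> phi" unfolding phi_eq by (intro CollectI exI[of _ "F \<union> G"]) simp
qed

lemma phi_sc: "x \<in> phi \<Longrightarrow> sscale c x \<in> phi"
proof -
  assume "x \<in> phi"
  then obtain F where "finite F" "\<forall>i. i \<notin> F \<longrightarrow> x i = 0" unfolding phi_eq by blast
  then show "sscale c x \<in> phi" unfolding phi_eq by (intro CollectI exI[of _ F]) (simp add: sscale_def)
qed

lemma FK_fks: "FK_space X T \<Longrightarrow> fks X T"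
proof -
  assume FK: "FK_space X T"
  have sub: "seq_subspace X" and top: "topspace T = X"
    and addc: "continuous_map (prod_topology T T) T (\<lambda>(x, y). sadd x y)"
    and scj: "continuous_map (prod_topology euclidean T) T (\<lambda>(c, x). sscale c x)"
    and cm: "completely_metrizable_space T" and coord: "\<And>j. continuous_map T euclidean (\<lambda>x. x j)"
    using FK unfolding FK_space_def by blast+
  show "fks X T"
  proof
    show "topspace T = X" by (rule top)
    show "0 \<in> X" using sub unfolding seq_subspace_def zero_seq by blast
    show "\<And>x y. x \<in> X \<Longrightarrow> y \<in> X \<Longrightarrow> x + y \<in> X" using sub unfolding seq_subspace_def sadd_eq by blast
    show "\<And>c x. x \<in> X \<Longrightarrow> sscale c x \<in> X" using sub unfolding seq_subspace_def by blast
    show "continuous_map (prod_topology T T) T (\<lambda>(x, y). x + y)" using addc by (simp add: sadd_eq)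
    show "continuous_map T T (sscale c)" for c
    proof -
      have "continuous_map T (prod_topology euclidean T) (\<lambda>x. (c, x))"
        by (simp add: continuous_map_pairwise o_def)
      from continuous_map_compose[OF this scj] show ?thesis by (simp add: o_def)
    qed
    show "continuous_map euclidean T (\<lambda>c. sscale c x)" if "x \<in> X" for x
    proof -
      have "continuous_map euclidean (prod_topology euclidean T) (\<lambda>c. (c, x))"
        using that top by (simp add: continuous_map_pairwise o_def)
      from continuous_map_compose[OF this scj] show ?thesis by (simp add: o_def)
    qed
    show "completely_metrizable_space T" by (rule cm)
    show "\<And>j. continuous_map T euclidean (\<lambda>x. x j)" by (rule coord)
  qed
qed

lemma closure_sub:
  assumes FX: "fks X T" and S: "S \<subseteq> X" "0 \<in> S" "\<And>x y. x\<in>S \<Longrightarrow> y\<in>S \<Longrightarrow> x + y \<in> S"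
    "\<And>c x. x\<in>S \<Longrightarrow> sscale c x \<in> S"
  shows "0 \<in> T closure_of S" "\<And>x y. x \<in> T closure_of S \<Longrightarrow> y \<in> T closure_of S \<Longrightarrow> x + y \<in> T closure_of S"
    "\<And>c x. x \<in> T closure_of S \<Longrightarrow> sscale c x \<in> T closure_of S"
proof -
  interpret fks X T by (rule FX)
  have ST: "S \<subseteq> topspace T" using S top by simp
  have clX: "T closure_of S \<subseteq> X" using closure_of_subset_topspace[of T S] top by simp
  show "0 \<in> T closure_of S" using closure_of_subset[OF ST] S(2) by blast
  show "x + y \<in> T closure_of S" if xy: "x \<in> T closure_of S" "y \<in> T closure_of S" for x y
  proof -
    have xX: "x \<in> X" "y \<in> X" using xy clX by blast+
    show ?thesis unfolding in_closure_of
    proof (intro conjI allI impI)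
      show "x + y \<in> topspace T" using addX xX top by simp
      fix N assume N: "x + y \<in> N \<and> openin T N"
      then have "openin T N" "x + y \<in> N" by simp_all
      from add_nbhd[OF this(1) xX this(2)]
      obtain A B where AB: "openin T A" "openin T B" "x \<in> A" "y \<in> B" "\<forall>a\<in>A. \<forall>b\<in>B. a + b \<in> N"
        by blast
      obtain a where a: "a \<in> S" "a \<in> A" using xy(1) AB(1,3) unfolding in_closure_of by blast
      obtain b where b: "b \<in> S" "b \<in> B" using xy(2) AB(2,4) unfolding in_closure_of by blast
      have "a + b \<in> S" using S(3)[OF a(1) b(1)] .
      moreover have "a + b \<in> N" using AB(5) a(2) b(2) by blast
      ultimately show "\<exists>z. z \<in> S \<and> z \<in> N" by blast
    qed
  qed
  show "sscale c x \<in> T closure_of S" if xc: "x \<in> T closure_of S" for c x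
  proof -
    have xX: "x \<in> X" using xc clX by blast
    have sX: "sscale c x \<in> topspace T" using scX[OF xX] top by simp
    have "\<exists>z. z \<in> S \<and> z \<in> N" if N: "sscale c x \<in> N" "openin T N" for N
    proof -
      have o: "openin T {z\<in>X. sscale c z \<in> N}" by (rule cont_open[OF scc N(2)])
      have xin: "x \<in> {z\<in>X. sscale c z \<in> N}" using xX N(1) by simp
      have cl: "\<forall>U. x \<in> U \<and> openin T U \<longrightarrow> (\<exists>y. y \<in> S \<and> y \<in> U)"
        using xc unfolding in_closure_of by (rule conjunct2)
      obtain a where a: "a \<in> S" "a \<in> {z\<in>X. sscale c z \<in> N}"
        using cl[rule_format, OF conjI[OF xin o]] by blast
      have "sscale c a \<in> S" by (rule S(4)[OF a(1)])
      moreover have "sscale c a \<in> N" using a(2) by simp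
      ultimately show ?thesis by blast
    qed
    then show ?thesis unfolding in_closure_of using sX by (intro conjI allI impI) auto
  qed
qed

lemma fks_closed:
  assumes FX: "fks X T" and C: "closedin T C" and C0: "0 \<in> C"
    and Cadd: "\<And>x y. x\<in>C \<Longrightarrow> y\<in>C \<Longrightarrow> x + y \<in> C"
    and Csc: "\<And>c x. x\<in>C \<Longrightarrow> sscale c x \<in> C"
  shows "fks C (subtopology T C)"
proof -
  interpret fks X T by (rule FX)
  have CX: "C \<subseteq> X" using closedin_subset[OF C] top by simp
  show ?thesis
  proof
    show tC: "topspace (subtopology T C) = C" using CX top by auto
    show "0 \<in> C" by (rule C0)
    show "\<And>x y. x \<in> C \<Longrightarrow> y \<in> C \<Longrightarrow> x + y \<in> C" by (rule Cadd)
    show "\<And>c x. x \<in> C \<Longrightarrow> sscale c x \<in> C" by (rule Csc)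
    show "continuous_map (prod_topology (subtopology T C) (subtopology T C)) (subtopology T C) (\<lambda>(x, y). x + y)"
      unfolding subtopology_Times[symmetric]
    proof (rule continuous_map_into_subtopology[OF continuous_map_from_subtopology[OF addc]])
      show "(\<lambda>(x, y). x + y) \<in> topspace (subtopology (prod_topology T T) (C \<times> C)) \<rightarrow> C"
      proof
        fix z assume "z \<in> topspace (subtopology (prod_topology T T) (C \<times> C))"
        then have "z \<in> C \<times> C" by simp
        then obtain a b where "z = (a, b)" "a \<in> C" "b \<in> C" by blast
        then show "(\<lambda>(x, y). x + y) z \<in> C" using Cadd by simp
      qed
    qed
    show "continuous_map (subtopology T C) (subtopology T C) (sscale c)" for c
      by (rule continuous_map_into_subtopology[OF continuous_map_from_subtopology[OF scc]])
         (simp add: Pi_iff Csc)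
    show "continuous_map euclidean (subtopology T C) (\<lambda>c. sscale c x)" if "x \<in> C" for x
      using that CX by (intro continuous_map_into_subtopology[OF scx]) (simp_all add: Pi_iff Csc subsetD)
    show "completely_metrizable_space (subtopology T C)" by (rule completely_metrizable_space_closedin[OF cm C])
    show "\<And>j. continuous_map (subtopology T C) euclidean (\<lambda>x. x j)"
      by (rule continuous_map_from_subtopology[OF coord])
  qed
qed



theorem mainTheorem12:
  fixes p q :: "nat \<Rightarrow> nat" and X Y :: "seq set" and TX TY :: "seq topology"
  assumes "\<forall>n. p n < q n"
    and "filterlim q at_top sequentially"
    and "FK_space X TX" and "phi \<subseteq> X"
    and "FK_space Y TY"
    and "TX closure_of phi \<subseteq> Y" and "Y \<subseteq> X"
  shows "DpqFplus p q Y TY = DpqFplus p q X TX"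
proof -
  have FX: "fks X TX" by (rule FK_fks[OF assms(3)])
  have FY: "fks Y TY" by (rule FK_fks[OF assms(5)])
  interpret B: fks X TX by (rule FX)
  interpret A: fks Y TY by (rule FY)
  have LC: "\<forall>U. openin TX U \<and> (\<lambda>i. 0) \<in> U \<longrightarrow>
        (\<exists>V. openin TX V \<and> (\<lambda>i. 0) \<in> V \<and> V \<subseteq> U \<and>
             (\<forall>x\<in>V. \<forall>y\<in>V. \<forall>t::real. 0 \<le> t \<and> t \<le> 1 \<longrightarrow>
                 sadd (sscale (complex_of_real t) x) (sscale (complex_of_real (1 - t)) y) \<in> V))"
    using assms(3) unfolding FK_space_def by (elim conjE) assumption
  define Phi where "Phi = TX closure_of phi"
  have Phi0: "0 \<in> Phi" and Phiadd: "\<And>x y. x \<in> Phi \<Longrightarrow> y \<in> Phi \<Longrightarrow> x + y \<in> Phi"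
    and Phisc: "\<And>c x. x \<in> Phi \<Longrightarrow> sscale c x \<in> Phi"
    unfolding Phi_def using closure_sub[OF FX assms(4) phi_0 phi_add phi_sc] by blast+
  have PhiX: "Phi \<subseteq> X" unfolding Phi_def using closure_of_subset_topspace[of TX phi] B.top by simp
  have phiPhi: "phi \<subseteq> Phi" unfolding Phi_def using closure_of_subset[of phi TX] assms(4) B.top by simp
  have PhiY: "Phi \<subseteq> Y" unfolding Phi_def by (rule assms(6))
  have FPhi: "fks Phi (subtopology TX Phi)"
    by (rule fks_closed[OF FX _ Phi0 Phiadd Phisc]) (simp add: Phi_def)
  have cdA: "f \<in> cdual Y TY" if f: "f \<in> cdual X TX" for f
  proof -
    have lin: "\<forall>x\<in>X. \<forall>y\<in>X. f (sadd x y) = f x + f y" "\<forall>c. \<forall>x\<in>X. f (sscale c x) = c * f x"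
      and fc: "continuous_map TX euclidean f" using f unfolding cdual_def by blast+
    have "continuous_map TY euclidean f"
      unfolding continuous_map_def
    proof (intro conjI allI impI)
      show "f \<in> topspace TY \<rightarrow> topspace euclidean" by simp
      fix U :: "complex set" assume U: "openin euclidean U"
      have "openin TX {x \<in> topspace TX. f x \<in> U}" by (rule openin_continuous_map_preimage[OF fc U])
      then have "openin TY ({x \<in> topspace TX. f x \<in> U} \<inter> Y)" by (rule incl_cont[OF FY FX assms(7)])
      moreover have "{x \<in> topspace TX. f x \<in> U} \<inter> Y = {x \<in> topspace TY. f x \<in> U}"
        using assms(7) A.top B.top by auto
      ultimately show "openin TY {x \<in> topspace TY. f x \<in> U}" by simp
    qed
    then show ?thesis using lin assms(7) unfolding cdual_def by blast
  qed
  have cdB: "\<exists>f\<in>cdual X TX. \<forall>j. f (delta j) = g (delta j)" if g: "g \<in> cdual Y TY" for g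
  proof -
    have gadd0: "\<forall>x\<in>Y. \<forall>y\<in>Y. g (sadd x y) = g x + g y" and gsc0: "\<forall>c. \<forall>x\<in>Y. g (sscale c x) = c * g x"
      and gc: "continuous_map TY euclidean g" using g unfolding cdual_def by blast+
    have gadd: "g (x + y) = g x + g y" if "x \<in> Phi" "y \<in> Phi" for x y
      using gadd0 that PhiY unfolding sadd_eq by blast
    have gsc: "g (sscale c x) = c * g x" if "x \<in> Phi" for c x
      using gsc0 that PhiY by blast
    have gcP: "continuous_map (subtopology TX Phi) euclidean g"
      unfolding continuous_map_def
    proof (intro conjI allI impI)
      show "g \<in> topspace (subtopology TX Phi) \<rightarrow> topspace euclidean" by simp
      fix U :: "complex set" assume U: "openin euclidean U"
      have "openin TY {x \<in> topspace TY. g x \<in> U}" by (rule openin_continuous_map_preimage[OF gc U])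
      then have "openin (subtopology TX Phi) ({x \<in> topspace TY. g x \<in> U} \<inter> Phi)"
        by (rule incl_cont[OF FPhi FY PhiY])
      moreover have "{x \<in> topspace TY. g x \<in> U} \<inter> Phi = {x \<in> topspace (subtopology TX Phi). g x \<in> U}"
        using PhiY PhiX A.top B.top by auto
      ultimately show "openin (subtopology TX Phi) {x \<in> topspace (subtopology TX Phi). g x \<in> U}" by simp
    qed
    obtain f where f: "f \<in> cdual X TX" "\<forall>x\<in>Phi. f x = g x"
      using complex_HB[OF FX LC PhiX Phi0 Phiadd Phisc gadd gsc gcP] by blast
    have "f (delta j) = g (delta j)" for j using f(2) phiPhi delta_phi by blast
    then show ?thesis using f(1) by blast
  qed
  show ?thesis
    unfolding DpqFplus_def
  proof (intro set_eqI iffI; clarify)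
    fix x f assume H: "\<forall>g\<in>cdual Y TY. convergent (\<lambda>n. 1 / of_nat (q n - p n) * (\<Sum>k\<in>{p n<..q n}. \<Sum>j<k. x j * g (delta j)))"
      and f: "f \<in> cdual X TX"
    show "convergent (\<lambda>n. 1 / of_nat (q n - p n) * (\<Sum>k\<in>{p n<..q n}. \<Sum>j<k. x j * f (delta j)))"
      using H cdA[OF f] by blast
  next
    fix x g assume H: "\<forall>f\<in>cdual X TX. convergent (\<lambda>n. 1 / of_nat (q n - p n) * (\<Sum>k\<in>{p n<..q n}. \<Sum>j<k. x j * f (delta j)))"
      and g: "g \<in> cdual Y TY"
    obtain f where f: "f \<in> cdual X TX" "\<forall>j. f (delta j) = g (delta j)" using cdB[OF g] by blast
    have "convergent (\<lambda>n. 1 / of_nat (q n - p n) * (\<Sum>k\<in>{p n<..q n}. \<Sum>j<k. x j * f (delta j)))"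
      using H f(1) by blast
    then show "convergent (\<lambda>n. 1 / of_nat (q n - p n) * (\<Sum>k\<in>{p n<..q n}. \<Sum>j<k. x j * g (delta j)))"
      using f(2) by simp
  qed
qed



end
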